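(* For every $\mathsf{K}\in\mathbb{K}$, the gradient of $J$ is $$\nabla_{C_{\mathsf{K}}}J(\mathsf{K})=2B^{\mathsf T}(P_{11}A+P_{12}B_{\mathsf{K}}C)\Sigma_{12}+2\big((R+B^{\mathsf T}P_{11}B)C_{\mathsf{K}}+B^{\mathsf T}P_{12}A_{\mathsf{K}}\big)\Sigma_{22},$$ $$\nabla_{B_{\mathsf{K}}}J(\mathsf{K})=2(P_{12}^{\mathsf T}A+P_{22}B_{\mathsf{K}}C)\Sigma_{11}C^{\mathsf T}+2(P_{12}^{\mathsf T}BC_{\mathsf{K}}+P_{22}A_{\mathsf{K}})\Sigma_{12}^{\mathsf T}C^{\mathsf T},$$ $$\nabla_{A_{\mathsf{K}}}J(\mathsf{K})=2(P_{12}^{\mathsf T}BC_{\mathsf{K}}+P_{22}A_{\mathsf{K}})\Sigma_{22}+2(P_{12}^{\mathsf T}A+P_{22}B_{\mathsf{K}}C)\Sigma_{12},$$ where $P_{\mathsf{K}}=\begin{bmatrix}P_{11}&P_{12}\\P_{12}^{\mathsf T}&P_{22}\end{bmatrix}$ and $\Sigma_{\mathsf{K}}=\begin{bmatrix}\Sigma_{11}&\Sigma_{12}\\\Sigma_{12}^{\mathsf T}&\Sigma_{22}\end{bmatrix}$ (blocks $n\times n$).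
   Context: Consider the discrete-time LTI system $x_{t+1}=Ax_t+Bu_t$, $y_t=Cx_t$ with $A\in\mathbb{R}^{n\times n}$, $B\in\mathbb{R}^{n\times m}$, $C\in\mathbb{R}^{d\times n}$, weights $Q\in\mathbb{S}^n_+$, $R\in\mathbb{S}^m_{++}$. A dynamic controller is $\xi_{t+1}=A_{\mathsf{K}}\xi_t+B_{\mathsf{K}}y_t$, $u_t=C_{\mathsf{K}}\xi_t$ with $\xi_t\in\mathbb{R}^n$, parametrized by $\mathsf{K}=\begin{bmatrix}0_{m\times d} & C_{\mathsf{K}}\\ B_{\mathsf{K}} & A_{\mathsf{K}}\end{bmatrix}$. Set $\bar A=\begin{bmatrix}A&0\\0&0\end{bmatrix}$, $\bar B=\begin{bmatrix}B&0\\0&I_n\end{bmatrix}$, $\bar C=\begin{bmatrix}C&0\\0&I_n\end{bmatrix}$, $\bar Q=\begin{bmatrix}Q&0\\0&0\end{bmatrix}$, $F=[0,I_n]$; closed loop $\bar x_{t+1}=(\bar A+\bar B\mathsf{K}\bar C)\bar x_t$, $\bar x_t=(x_t,\xi_t)$. $\mathbb{K}=\{\mathsf{K}:\rho(\bar A+\bar B\mathsf{K}\bar C)<1\}$. The initial $\bar x_0$ is drawn from a fixed distribution $\bar{\mathcal D}$ with $X=\mathbb{E}\,\bar x_0\bar x_0^{\mathsf T}$. The cost is $J(\mathsf{K})=\mathbb{E}\sum_{t=0}^\infty(x_t^{\mathsf T}Qx_t+u_t^{\mathsf T}Ru_t)$, viewed as a function of $(A_{\mathsf{K}},B_{\mathsf{K}},C_{\mathsf{K}})$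 on $\mathbb{K}$. $P_{\mathsf{K}}$ is the unique positive semidefinite solution of $P_{\mathsf{K}}=\bar Q+F^{\mathsf T}C_{\mathsf{K}}^{\mathsf T}RC_{\mathsf{K}}F+(\bar A+\bar B\mathsf{K}\bar C)^{\mathsf T}P_{\mathsf{K}}(\bar A+\bar B\mathsf{K}\bar C)$, and $\Sigma_{\mathsf{K}}=\mathbb{E}\sum_{t=0}^\infty\bar x_t\bar x_t^{\mathsf T}$, the unique positive semidefinite solution of $\Sigma_{\mathsf{K}}=X+(\bar A+\bar B\mathsf{K}\bar C)\Sigma_{\mathsf{K}}(\bar A+\bar B\mathsf{K}\bar C)^{\mathsf T}$. *)

theory Defs
  imports "HOL-Analysis.Analysis" "HOL-Probability.Probability"
begin

text \<open>Matrices are HOL-Analysis matrices: a p x q real matrix has type real^'q^'p.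
  The augmented state (x, xi) lives in real^('n + 'n): index Inl i is x_i, Inr i is xi_i.\<close>

definition psd_mat :: "real^'n::finite^'n \<Rightarrow> bool" where
  "psd_mat M \<longleftrightarrow> transpose M = M \<and> (\<forall>x. 0 \<le> x \<bullet> (M *v x))"

definition pd_mat :: "real^'n::finite^'n \<Rightarrow> bool" where
  "pd_mat M \<longleftrightarrow> transpose M = M \<and> (\<forall>x. x \<noteq> 0 \<longrightarrow> 0 < x \<bullet> (M *v x))"

definition cplx_mat :: "real^'n::finite^'m::finite \<Rightarrow> complex^'n^'m" where
  "cplx_mat M = (\<chi> i j. complex_of_real (M $ i $ j))"

definition eigenvalues :: "real^'n::finite^'n \<Rightarrow> complex set" where
  "eigenvalues M = {l. \<exists>v::complex^'n. v \<noteq> 0 \<and> cplx_mat M *v v = l *s v}"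

definition spectral_radius :: "real^'n::finite^'n \<Rightarrow> real" where
  "spectral_radius M = Max (cmod ` eigenvalues M)"

definition blk :: "real^'c1^'r1 \<Rightarrow> real^'c2^'r1 \<Rightarrow> real^'c1^'r2 \<Rightarrow> real^'c2^'r2
    \<Rightarrow> real^('c1 + 'c2)^('r1 + 'r2)" where
  "blk M11 M12 M21 M22 = (\<chi> i j. case i of
      Inl a \<Rightarrow> (case j of Inl b \<Rightarrow> M11 $ a $ b | Inr b \<Rightarrow> M12 $ a $ b)
    | Inr a \<Rightarrow> (case j of Inl b \<Rightarrow> M21 $ a $ b | Inr b \<Rightarrow> M22 $ a $ b))"

definition blk11 :: "real^('c1::finite + 'c2::finite)^('r1::finite + 'r2::finite) \<Rightarrow> real^'c1^'r1" where
  "blk11 M = (\<chi> i j. M $ Inl i $ Inl j)"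
definition blk12 :: "real^('c1::finite + 'c2::finite)^('r1::finite + 'r2::finite) \<Rightarrow> real^'c2^'r1" where
  "blk12 M = (\<chi> i j. M $ Inl i $ Inr j)"
definition blk22 :: "real^('c1::finite + 'c2::finite)^('r1::finite + 'r2::finite) \<Rightarrow> real^'c2^'r2" where
  "blk22 M = (\<chi> i j. M $ Inr i $ Inr j)"

definition Abar :: "real^'n::finite^'n \<Rightarrow> real^('n + 'n)^('n + 'n)" where
  "Abar A = blk A 0 0 0"
definition Bbar :: "real^'m::finite^'n::finite \<Rightarrow> real^('m + 'n)^('n + 'n)" where
  "Bbar B = blk B 0 0 (mat 1)"
definition Cbar :: "real^'n::finite^'d::finite \<Rightarrow> real^('n + 'n)^('d + 'n)" where
  "Cbar C = blk C 0 0 (mat 1)"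
definition Qbar :: "real^'n::finite^'n \<Rightarrow> real^('n + 'n)^('n + 'n)" where
  "Qbar Q = blk Q 0 0 0"
definition Fsel :: "real^('n::finite + 'n)^'n" where
  "Fsel = (\<chi> i j. case j of Inl _ \<Rightarrow> 0 | Inr b \<Rightarrow> (if b = i then 1 else 0))"
definition Kmat :: "real^'n::finite^'n \<Rightarrow> real^'d::finite^'n \<Rightarrow> real^'n^'m::finite \<Rightarrow> real^('d + 'n)^('m + 'n)" where
  "Kmat AK BK CK = blk 0 CK BK AK"

definition Acl :: "real^'n::finite^'n \<Rightarrow> real^'m::finite^'n \<Rightarrow> real^'n^'d::finite
    \<Rightarrow> real^'n^'n \<Rightarrow> real^'d^'n \<Rightarrow> real^'n^'m \<Rightarrow> real^('n + 'n)^('n + 'n)" where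
  "Acl A B C AK BK CK = Abar A + Bbar B ** Kmat AK BK CK ** Cbar C"

definition stab_set :: "real^'n::finite^'n \<Rightarrow> real^'m::finite^'n \<Rightarrow> real^'n^'d::finite
    \<Rightarrow> ((real^'n^'n) \<times> (real^'d^'n) \<times> (real^'n^'m)) set" where
  "stab_set A B C = {(AK, BK, CK). spectral_radius (Acl A B C AK BK CK) < 1}"

definition traj :: "real^('n::finite + 'n)^('n + 'n) \<Rightarrow> real^('n + 'n) \<Rightarrow> nat \<Rightarrow> real^('n + 'n)" where
  "traj M z t = (((*v) M) ^^ t) z"

definition xpart :: "real^('n::finite + 'n) \<Rightarrow> real^'n" where
  "xpart z = (\<chi> i. z $ Inl i)"
definition xipart :: "real^('n::finite + 'n) \<Rightarrow> real^'n" where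
  "xipart z = (\<chi> i. z $ Inr i)"

definition Jcost :: "(real^('n::finite + 'n)) measure \<Rightarrow> real^'n^'n \<Rightarrow> real^'m::finite^'n \<Rightarrow> real^'n^'d::finite
    \<Rightarrow> real^'n^'n \<Rightarrow> real^'m^'m \<Rightarrow> (real^'n^'n) \<times> (real^'d^'n) \<times> (real^'n^'m) \<Rightarrow> real" where
  "Jcost D A B C Q R = (\<lambda>(AK, BK, CK).
     integral\<^sup>L D (\<lambda>z. \<Sum>t. (let xb = traj (Acl A B C AK BK CK) z t;
                              x = xpart xb; u = CK *v xipart xb
                          in x \<bullet> (Q *v x) + u \<bullet> (R *v u))))"

definition Xmom :: "(real^('n::finite + 'n)) measure \<Rightarrow> real^('n + 'n)^('n + 'n)" where
  "Xmom D = (\<chi> i j. integral\<^sup>L D (\<lambda>z. z $ i * z $ j))"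

definition PK :: "real^'n::finite^'n \<Rightarrow> real^'m::finite^'n \<Rightarrow> real^'n^'d::finite \<Rightarrow> real^'n^'n \<Rightarrow> real^'m^'m
    \<Rightarrow> real^'n^'n \<Rightarrow> real^'d^'n \<Rightarrow> real^'n^'m \<Rightarrow> real^('n + 'n)^('n + 'n)" where
  "PK A B C Q R AK BK CK = (THE P. psd_mat P \<and>
     P = Qbar Q + transpose Fsel ** transpose CK ** R ** CK ** Fsel
         + transpose (Acl A B C AK BK CK) ** P ** Acl A B C AK BK CK)"

definition SigmaK :: "real^('n::finite + 'n)^('n + 'n) \<Rightarrow> real^'n^'n \<Rightarrow> real^'m::finite^'n \<Rightarrow> real^'n^'d::finite
    \<Rightarrow> real^'n^'n \<Rightarrow> real^'d^'n \<Rightarrow> real^'n^'m \<Rightarrow> real^('n + 'n)^('n + 'n)" where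
  "SigmaK X A B C AK BK CK = (THE S. psd_mat S \<and>
     S = X + Acl A B C AK BK CK ** S ** transpose (Acl A B C AK BK CK))"

end

theory Submission
  imports Defs Jordan_Normal_Form.Spectral_Radius
begin


no_notation vec_index (infixl "$" 100)
no_notation scalar_prod (infix "\<bullet>" 70)

fun mpow :: "real^'k::finite^'k \<Rightarrow> nat \<Rightarrow> real^'k^'k" where
  "mpow M 0 = Finite_Cartesian_Product.mat 1"
| "mpow M (Suc t) = M ** mpow M t"

lemma mpow_comm: "mpow M t ** M = M ** mpow M t"
  by (induction t) (simp_all add: matrix_mul_assoc[symmetric])

definition jm :: "(nat \<Rightarrow> 'k::finite) \<Rightarrow> complex^'k^'k \<Rightarrow> complex mat" where
  "jm h M = Matrix.mat CARD('k) CARD('k) (\<lambda>(i,j). M $ h i $ h j)"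

lemma jm_carrier: "jm h (M::complex^'k::finite^'k) \<in> carrier_mat CARD('k) CARD('k)"
  unfolding jm_def by simp

lemma reindex_sum:
  assumes h: "bij_betw h {..<CARD('k)} (UNIV::'k::finite set)"
  shows "(\<Sum>l\<in>{0..<CARD('k)}. f (h l)) = (\<Sum>k\<in>UNIV. f k)"
proof -
  have "{0..<CARD('k)} = {..<CARD('k)}" by auto
  then show ?thesis using sum.reindex_bij_betw[OF h, of f] by simp
qed

lemma jm_mult:
  assumes h: "bij_betw h {..<CARD('k)} (UNIV::'k::finite set)"
  shows "jm h (A ** B) = jm h A * jm h (B :: complex^'k^'k)"
proof (rule eq_matI)
  fix i j assume i: "i < dim_row (jm h A * jm h B)" and j: "j < dim_col (jm h A * jm h B)"
  then have i': "i < CARD('k)" and j': "j < CARD('k)" by (simp_all add: jm_def)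
  have "(jm h A * jm h B) $$ (i,j) = (\<Sum>l\<in>{0..<CARD('k)}. A $ h i $ h l * B $ h l $ h j)"
    using i' j' by (simp add: jm_def scalar_prod_def)
  also have "\<dots> = (\<Sum>k\<in>UNIV. A $ h i $ k * B $ k $ h j)"
    by (rule reindex_sum[OF h, of "\<lambda>k. A $ h i $ k * B $ k $ h j"])
  also have "\<dots> = jm h (A ** B) $$ (i,j)"
    using i' j' by (simp add: jm_def matrix_matrix_mult_def)
  finally show "jm h (A ** B) $$ (i,j) = (jm h A * jm h B) $$ (i,j)" by simp
qed (simp_all add: jm_def)

definition cm :: "real^'k::finite^'k \<Rightarrow> complex^'k^'k" where
  "cm M = (\<chi> i j. complex_of_real (M $ i $ j))"

lemma cm_mult: "cm (A ** B) = cm A ** cm B"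
  unfolding cm_def matrix_matrix_mult_def by (simp add: Finite_Cartesian_Product.vec_eq_iff)

lemma cm_one: "cm (Finite_Cartesian_Product.mat 1 :: real^'k::finite^'k) = Finite_Cartesian_Product.mat 1"
proof -
  have "cm (Finite_Cartesian_Product.mat 1 :: real^'k^'k) $ i $ j = (Finite_Cartesian_Product.mat 1 :: complex^'k^'k) $ i $ j" for i j
    by (simp add: cm_def Finite_Cartesian_Product.mat_def)
  then show ?thesis unfolding Finite_Cartesian_Product.vec_eq_iff by blast
qed

lemma jm_one:
  assumes h: "bij_betw h {..<CARD('k)} (UNIV::'k::finite set)"
  shows "jm h (Finite_Cartesian_Product.mat 1 :: complex^'k^'k) = 1\<^sub>m CARD('k)"
proof (rule eq_matI)
  fix i j assume "i < dim_row (1\<^sub>m CARD('k))" "j < dim_col (1\<^sub>m CARD('k))"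
  then have i: "i < CARD('k)" and j: "j < CARD('k)" by simp_all
  have "h i = h j \<longleftrightarrow> i = j" using h i j unfolding bij_betw_def inj_on_def by auto
  then show "jm h (Finite_Cartesian_Product.mat 1) $$ (i, j) = 1\<^sub>m CARD('k) $$ (i, j)"
    using i j by (simp add: jm_def Finite_Cartesian_Product.mat_def)
qed (simp_all add: jm_def)

lemma jm_pow:
  assumes h: "bij_betw h {..<CARD('k)} (UNIV::'k::finite set)"
  shows "jm h (cm (mpow M t)) = jm h (cm M) ^\<^sub>m t"
proof (induction t)
  case 0 then show ?case using jm_one[OF h] by (simp add: cm_one jm_def)
next
  case (Suc t)
  have "jm h (cm (mpow M (Suc t))) = jm h (cm (mpow M t ** M))" by (simp add: mpow_comm)
  also have "\<dots> = jm h (cm M) ^\<^sub>m t * jm h (cm M)" by (simp add: cm_mult jm_mult[OF h] Suc)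
  finally show ?case by simp
qed




lemma cm_cplx: "cplx_mat M = cm M"
  unfolding cplx_mat_def cm_def ..

lemma eig_corr:
  assumes h: "bij_betw h {..<CARD('k)} (UNIV::'k::finite set)"
  shows "eigenvalue (jm h (cm (M::real^'k^'k))) l \<longleftrightarrow> l \<in> eigenvalues M"
proof -
  let ?N = "CARD('k)"
  define hi where "hi = inv_into {..<?N} h"
  have hi1: "\<And>i. i < ?N \<Longrightarrow> hi (h i) = i" unfolding hi_def using h
    by (simp add: bij_betw_def inv_into_f_f)
  have hi2: "\<And>k. h (hi k) = k" unfolding hi_def using h
    by (simp add: bij_betw_def f_inv_into_f)
  have hi3: "\<And>k. hi k < ?N" unfolding hi_def using h
    by (metis bij_betw_def inv_into_into lessThan_iff UNIV_I)
  have rs: "\<And>f. (\<Sum>l\<in>{0..<?N}. f (h l)) = (\<Sum>k\<in>UNIV. f k)" by (rule reindex_sum[OF h])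
  show ?thesis
  proof
    assume "eigenvalue (jm h (cm M)) l"
    then obtain v where v: "v \<in> carrier_vec ?N" "v \<noteq> 0\<^sub>v ?N" "jm h (cm M) *\<^sub>v v = l \<cdot>\<^sub>v v"
      unfolding eigenvalue_def eigenvector_def by (auto simp: jm_def)
    define w :: "complex^'k" where "w = (\<chi> k. vec_index v (hi k))"
    have dv: "dim_vec v = ?N" using v(1) by simp
    have "w \<noteq> 0"
    proof
      assume w0: "w = 0"
      have "v = 0\<^sub>v ?N"
      proof (rule eq_vecI)
        fix i assume "i < dim_vec (0\<^sub>v ?N)"
        then have i: "i < ?N" by simp
        have "vec_index v i = w $ h i" unfolding w_def using hi1[OF i] by simp
        then show "vec_index v i = vec_index (0\<^sub>v ?N) i" using w0 i by simp
      qed (simp add: dv)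
      with v(2) show False by simp
    qed
    moreover have "cplx_mat M *v w = l *s w"
    proof -
      have "(cm M *v w) $ k = (l *s w) $ k" for k
      proof -
        have i: "hi k < ?N" by (rule hi3)
        have "(cm M *v w) $ k = (\<Sum>k'\<in>UNIV. cm M $ k $ k' * w $ k')"
          by (simp add: matrix_vector_mult_def)
        also have "\<dots> = (\<Sum>l'\<in>{0..<?N}. cm M $ k $ h l' * w $ h l')"
          by (rule rs[symmetric])
        also have "\<dots> = (\<Sum>l'\<in>{0..<?N}. jm h (cm M) $$ (hi k, l') * vec_index v l')"
          by (intro sum.cong refl) (simp add: jm_def w_def hi1 hi2 i)
        also have "\<dots> = vec_index (jm h (cm M) *\<^sub>v v) (hi k)"
          using i dv by (simp add: scalar_prod_def jm_def)
        also have "\<dots> = l * vec_index v (hi k)" using v(3) i dv by simp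
        also have "\<dots> = (l *s w) $ k" by (simp add: w_def)
        finally show ?thesis .
      qed
      then show ?thesis by (simp add: cm_cplx Finite_Cartesian_Product.vec_eq_iff)
    qed
    ultimately show "l \<in> eigenvalues M" unfolding eigenvalues_def by blast
  next
    assume "l \<in> eigenvalues M"
    then obtain w :: "complex^'k" where w: "w \<noteq> 0" "cm M *v w = l *s w"
      unfolding eigenvalues_def cm_cplx by blast
    define v where "v = vec ?N (\<lambda>i. w $ h i)"
    have "v \<noteq> 0\<^sub>v ?N"
    proof
      assume v0: "v = 0\<^sub>v ?N"
      have "w = 0"
      proof -
        have "w $ k = 0" for k
        proof -
          have "w $ k = vec_index v (hi k)" unfolding v_def using hi3[of k] by (simp add: hi2)
          then show ?thesis using v0 hi3[of k] by simp
        qed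
        then show ?thesis by (simp add: Finite_Cartesian_Product.vec_eq_iff)
      qed
      with w(1) show False by simp
    qed
    moreover have "jm h (cm M) *\<^sub>v v = l \<cdot>\<^sub>v v"
    proof (rule eq_vecI)
      fix i assume "i < dim_vec (l \<cdot>\<^sub>v v)"
      then have i: "i < ?N" by (simp add: v_def)
      have "vec_index (jm h (cm M) *\<^sub>v v) i = (\<Sum>l'\<in>{0..<?N}. cm M $ h i $ h l' * w $ h l')"
        using i by (simp add: scalar_prod_def jm_def v_def)
      also have "\<dots> = (\<Sum>k\<in>UNIV. cm M $ h i $ k * w $ k)" by (rule rs)
      also have "\<dots> = (cm M *v w) $ h i" by (simp add: matrix_vector_mult_def)
      also have "\<dots> = l * w $ h i" using w(2) by simp
      also have "\<dots> = vec_index (l \<cdot>\<^sub>v v) i" using i by (simp add: v_def)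
      finally show "vec_index (jm h (cm M) *\<^sub>v v) i = vec_index (l \<cdot>\<^sub>v v) i" .
    qed (simp add: v_def jm_def)
    moreover have "v \<in> carrier_vec ?N" by (simp add: v_def)
    ultimately have "eigenvector (jm h (cm M)) v l" unfolding eigenvector_def by (simp add: jm_def)
    then show "eigenvalue (jm h (cm M)) l" unfolding eigenvalue_def by blast
  qed
qed




lemma mpow_scale: "mpow (a *\<^sub>R M) t = a^t *\<^sub>R mpow M t"
  by (induction t) (simp_all add: scalar_matrix_assoc[symmetric] matrix_scalar_ac)

lemma eig_scale:
  assumes "l \<in> eigenvalues (a *\<^sub>R M)" "a \<noteq> 0"
  shows "l / complex_of_real a \<in> eigenvalues M"
proof -
  obtain v where v: "v \<noteq> 0" "cplx_mat (a *\<^sub>R M) *v v = l *s v"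
    using assms(1) unfolding eigenvalues_def by blast
  have "cplx_mat (a *\<^sub>R M) *v v = complex_of_real a *s (cplx_mat M *v v)"
    by (simp add: cplx_mat_def matrix_vector_mult_def Finite_Cartesian_Product.vec_eq_iff
        sum_distrib_left mult.assoc)
  then have "complex_of_real a *s (cplx_mat M *v v) = l *s v" using v(2) by simp
  then have "cplx_mat M *v v = (l / complex_of_real a) *s v"
    using assms(2) by (simp add: Finite_Cartesian_Product.vec_eq_iff field_simps)
  then show ?thesis using v(1) unfolding eigenvalues_def by blast
qed

lemma rho_bound:
  assumes "Defs.spectral_radius (M::real^'k::finite^'k) < 1"
  shows "\<exists>c s. 0 \<le> c \<and> 0 \<le> s \<and> s < 1 \<and> (\<forall>t i j. \<bar>mpow M t $ i $ j\<bar> \<le> c * s^t)"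
proof -
  let ?N = "CARD('k)"
  obtain h where h0: "bij_betw h {0..<?N} (UNIV::'k set)"
    using ex_bij_betw_nat_finite[of "UNIV::'k set"] by auto
  have h: "bij_betw h {..<?N} (UNIV::'k set)" using h0 by (simp add: atLeast0LessThan)
  have spec: "\<And>X::real^'k^'k. Spectral_Radius.spectrum (jm h (cm X)) = eigenvalues X"
    unfolding Spectral_Radius.spectrum_def using eig_corr[OF h] by auto
  have fin: "\<And>X::real^'k^'k. finite (eigenvalues X)"
    using card_finite_spectrum(1)[OF jm_carrier] spec by metis
  have ne: "\<And>X::real^'k^'k. eigenvalues X \<noteq> {}"
    using spectrum_non_empty[OF jm_carrier] spec by (metis zero_less_card_finite)
  define \<rho> where "\<rho> = Defs.spectral_radius M"
  have le_rho: "\<And>l. l \<in> eigenvalues M \<Longrightarrow> cmod l \<le> \<rho>"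
    unfolding \<rho>_def Defs.spectral_radius_def using fin by (intro Max_ge) auto
  have rho0: "0 \<le> \<rho>" using ne[of M] le_rho norm_ge_zero by (metis all_not_in_conv order_trans)
  define s where "s = (\<rho> + 1) / 2"
  have s: "0 < s" "s < 1" "\<rho> < s" using rho0 assms unfolding s_def \<rho>_def by auto
  define M' where "M' = (1 / s) *\<^sub>R M"
  have ev': "cmod l < 1" if l: "l \<in> eigenvalues M'" for l
  proof -
    have "l / complex_of_real (1/s) \<in> eigenvalues M"
      using eig_scale[OF l[unfolded M'_def]] s by simp
    then have "cmod (l / complex_of_real (1/s)) \<le> \<rho>" by (rule le_rho)
    then have "cmod l * s \<le> \<rho>" using s by (simp add: norm_divide norm_mult)
    then have "cmod l * s < 1 * s" using s by linarith
    then show ?thesis using s(1) by (simp only: mult_less_cancel_right_pos)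
  qed
  have "Spectral_Radius.spectral_radius (jm h (cm M')) < 1"
    unfolding Spectral_Radius.spectral_radius_def spec
    using fin[of M'] ne[of M'] ev' by (simp add: Max_less_iff)
  from spectral_radius_jnf_norm_bound_less_1_upper_triangular[OF jm_carrier this]
  obtain c0 where c0: "\<And>t. norm_bound (jm h (cm M') ^\<^sub>m t) c0" by blast
  have ent: "\<bar>mpow M' t $ a $ b\<bar> \<le> c0" for t a b
  proof -
    define hi where "hi = inv_into {..<?N} h"
    have hi2: "\<And>k. h (hi k) = k" unfolding hi_def using h
      by (simp add: bij_betw_def f_inv_into_f)
    have hi3: "\<And>k. hi k < ?N" unfolding hi_def using h
      by (metis bij_betw_def inv_into_into lessThan_iff UNIV_I)
    have "norm ((jm h (cm M') ^\<^sub>m t) $$ (hi a, hi b)) \<le> c0"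
      using c0[of t] hi3[of a] hi3[of b] jm_carrier unfolding norm_bound_def
      by (metis pow_mat_dim_square)
    then show ?thesis
      unfolding jm_pow[OF h, symmetric] using hi3[of a] hi3[of b]
      by (simp add: jm_def cm_def hi2)
  qed
  have c0pos: "0 \<le> c0" using ent[of 0 undefined undefined] by (meson abs_ge_zero order_trans)
  have "\<bar>mpow M t $ i $ j\<bar> \<le> c0 * s^t" for t i j
  proof -
    have "mpow M' t = (1/s)^t *\<^sub>R mpow M t" unfolding M'_def by (rule mpow_scale)
    then have "\<bar>mpow M' t $ i $ j\<bar> = (1/s)^t * \<bar>mpow M t $ i $ j\<bar>"
      using s by (simp add: abs_mult)
    then have "(1/s)^t * \<bar>mpow M t $ i $ j\<bar> \<le> c0" using ent by metis
    then have "s^t * ((1/s)^t * \<bar>mpow M t $ i $ j\<bar>) \<le> s^t * c0"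
      using s by (intro mult_left_mono) auto
    then show ?thesis using s by (simp add: power_one_over field_simps)
  qed
  then show ?thesis using c0pos s by (intro exI[of _ c0] exI[of _ s]) auto
qed




definition mn :: "real^'a::finite^'b::finite \<Rightarrow> real" where
  "mn A = (\<Sum>i\<in>UNIV. \<Sum>j\<in>UNIV. \<bar>A$i$j\<bar>)"

lemma mn_nonneg: "0 \<le> mn A"
  unfolding mn_def by (intro sum_nonneg) auto

lemma mn_entry: "\<bar>A$i$j\<bar> \<le> mn A"
proof -
  have "\<bar>A$i$j\<bar> \<le> (\<Sum>j\<in>UNIV. \<bar>A$i$j\<bar>)"
    by (rule member_le_sum) auto
  also have "\<dots> \<le> mn A" unfolding mn_def
    by (rule member_le_sum[where f="\<lambda>i. \<Sum>j\<in>UNIV. \<bar>A$i$j\<bar>"]) (auto intro: sum_nonneg)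
  finally show ?thesis .
qed

lemma mn_add: "mn (A + B) \<le> mn A + mn B"
  unfolding mn_def sum.distrib[symmetric]
  by (intro sum_mono) (auto intro: abs_triangle_ineq)

lemma mn_minus: "mn (- A) = mn A"
  unfolding mn_def by simp

lemma mn_diff: "mn (A - B) \<le> mn A + mn B"
  using mn_add[of A "-B"] by (simp add: mn_minus)

lemma mn_scaleR: "mn (c *\<^sub>R A) = \<bar>c\<bar> * mn A"
  unfolding mn_def by (simp add: sum_distrib_left abs_mult)

lemma mn_sum: "finite S \<Longrightarrow> mn (sum f S) \<le> (\<Sum>x\<in>S. mn (f x))"
proof (induction S rule: finite_induct)
  case empty then show ?case by (simp add: mn_def)
next
  case (insert x S)
  then show ?case using mn_add[of "f x" "sum f S"] by simp
qed

lemma mn_transpose: "mn (transpose A) = mn A"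
  unfolding mn_def transpose_def by (simp, rule sum.swap)

lemma mn_mult: "mn (A ** B) \<le> mn A * mn B"
proof -
  have "mn (A ** B) \<le> (\<Sum>i\<in>UNIV. \<Sum>j\<in>UNIV. \<Sum>k\<in>UNIV. \<bar>A$i$k\<bar> * \<bar>B$k$j\<bar>)"
    unfolding mn_def matrix_matrix_mult_def
    by (auto intro!: sum_mono order.trans[OF sum_abs] simp: abs_mult)
  also have "\<dots> = (\<Sum>i\<in>UNIV. \<Sum>k\<in>UNIV. \<bar>A$i$k\<bar> * (\<Sum>j\<in>UNIV. \<bar>B$k$j\<bar>))"
    by (simp add: sum_distrib_left, intro sum.cong refl, rule sum.swap)
  also have "\<dots> \<le> (\<Sum>i\<in>UNIV. \<Sum>k\<in>UNIV. \<bar>A$i$k\<bar> * mn B)"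
  proof (intro sum_mono mult_left_mono)
    fix k
    show "(\<Sum>j\<in>UNIV. \<bar>B$k$j\<bar>) \<le> mn B" unfolding mn_def
      by (rule member_le_sum[where f="\<lambda>i. \<Sum>j\<in>UNIV. \<bar>B$i$j\<bar>"]) (auto intro: sum_nonneg)
  qed auto
  also have "\<dots> = mn A * mn B" unfolding mn_def by (simp add: sum_distrib_right)
  finally show ?thesis .
qed

lemma mn_mat1: "mn (Finite_Cartesian_Product.mat 1 :: real^'k::finite^'k) = real CARD('k)"
  unfolding mn_def Finite_Cartesian_Product.mat_def by (simp add: if_distrib sum.delta cong: if_cong)

lemma norm_le_mn: "norm A \<le> mn A"
proof -
  have "norm A \<le> (\<Sum>i\<in>UNIV. norm (A$i))"
    unfolding norm_vec_def by (rule L2_set_le_sum) simp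
  also have "\<dots> \<le> mn A" unfolding mn_def by (intro sum_mono norm_le_l1_cart[simplified])
  finally show ?thesis .
qed

lemma mn_le_norm: "mn (A::real^'a::finite^'b::finite) \<le> real CARD('b) * real CARD('a) * norm A"
proof -
  have "mn A \<le> (\<Sum>i\<in>(UNIV::'b set). \<Sum>j\<in>(UNIV::'a set). norm A)"
    unfolding mn_def
  proof (intro sum_mono)
    fix i j
    have "\<bar>A$i$j\<bar> \<le> norm (A$i)" by (rule component_le_norm_cart)
    also have "\<dots> \<le> norm A" by (rule Finite_Cartesian_Product.norm_nth_le)
    finally show "\<bar>A$i$j\<bar> \<le> norm A" .
  qed
  then show ?thesis by simp
qed

lemma norm_mv: "norm (A *v y) \<le> mn A * norm y"
proof -
  have "norm (A *v y) \<le> (\<Sum>i\<in>UNIV. \<bar>(A *v y)$i\<bar>)" by (rule norm_le_l1_cart)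
  also have "\<dots> \<le> (\<Sum>i\<in>UNIV. \<Sum>j\<in>UNIV. \<bar>A$i$j\<bar> * norm y)"
  proof (rule sum_mono)
    fix i
    have "\<bar>(A *v y)$i\<bar> = \<bar>\<Sum>j\<in>UNIV. A$i$j * y$j\<bar>"
      by (simp add: matrix_vector_mult_def)
    also have "\<dots> \<le> (\<Sum>j\<in>UNIV. \<bar>A$i$j * y$j\<bar>)" by (rule sum_abs)
    also have "\<dots> \<le> (\<Sum>j\<in>UNIV. \<bar>A$i$j\<bar> * norm y)"
      by (rule sum_mono) (simp add: abs_mult mult_left_mono component_le_norm_cart)
    finally show "\<bar>(A *v y)$i\<bar> \<le> (\<Sum>j\<in>UNIV. \<bar>A$i$j\<bar> * norm y)" .
  qed
  also have "\<dots> = mn A * norm y" unfolding mn_def by (simp add: sum_distrib_right)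
  finally show ?thesis .
qed

lemma quad_bound: "\<bar>x \<bullet> (A *v y)\<bar> \<le> mn A * norm x * norm y"
proof -
  have "\<bar>x \<bullet> (A *v y)\<bar> \<le> norm x * norm (A *v y)" by (rule Cauchy_Schwarz_ineq2)
  also have "\<dots> \<le> norm x * (mn A * norm y)" by (intro mult_left_mono norm_mv) simp
  finally show ?thesis by (simp add: algebra_simps)
qed

lemma matrix_add_rdistrib: "(B + C) ** A = B ** A + C ** (A::real^'a::finite^'b::finite)"
  by (vector matrix_matrix_mult_def sum.distrib[symmetric] field_simps)

lemma matrix_diff_ldistrib: "A ** (B - C) = A ** B - A ** (C::real^'a::finite^'b::finite)"
  by (vector matrix_matrix_mult_def sum_subtractf[symmetric] field_simps)

lemma matrix_diff_rdistrib: "(B - C) ** A = B ** A - C ** (A::real^'a::finite^'b::finite)"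
  by (vector matrix_matrix_mult_def sum_subtractf[symmetric] field_simps)

lemmas mdist = matrix_add_ldistrib matrix_add_rdistrib matrix_diff_ldistrib matrix_diff_rdistrib

lemma traj_mpow: "traj M z t = mpow M t *v z"
  unfolding traj_def by (induction t) (simp_all add: matrix_vector_mul_assoc)

lemma matrix_mul_sum_left: "finite S \<Longrightarrow> A ** sum f S = (\<Sum>x\<in>S. A ** f x)"
  by (induction S rule: finite_induct) (simp_all add: matrix_add_ldistrib)

lemma matrix_mul_sum_right: "finite S \<Longrightarrow> sum f S ** (A::real^'a::finite^'b::finite) = (\<Sum>x\<in>S. f x ** A)"
  by (induction S rule: finite_induct) (simp_all add: matrix_add_rdistrib)

lemma mpow_perturb_id:
  "mpow M t = mpow M0 t + (\<Sum>s<t. mpow M0 (t - 1 - s) ** (M - M0) ** mpow M s)"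
proof (induction t)
  case 0 then show ?case by simp
next
  case (Suc t)
  have eq: "(\<Sum>s<t. M0 ** (mpow M0 (t - Suc s) ** (M - M0) ** mpow M s))
      = (\<Sum>s<t. mpow M0 (t - s) ** (M - M0) ** mpow M s)"
  proof (rule sum.cong[OF refl])
    fix s assume "s \<in> {..<t}"
    then have "t - s = Suc (t - Suc s)" by simp
    then show "M0 ** (mpow M0 (t - Suc s) ** (M - M0) ** mpow M s)
      = mpow M0 (t - s) ** (M - M0) ** mpow M s"
      by (simp add: matrix_mul_assoc)
  qed
  have "mpow M (Suc t) = M0 ** mpow M t + (M - M0) ** mpow M t"
    by (simp add: matrix_add_rdistrib[symmetric])
  also have "\<dots> = M0 ** mpow M0 t + (\<Sum>s<t. M0 ** (mpow M0 (t - 1 - s) ** (M - M0) ** mpow M s))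
      + (M - M0) ** mpow M t"
    by (subst Suc) (simp add: matrix_add_ldistrib matrix_mul_sum_left)
  also have "\<dots> = mpow M0 (Suc t) + (\<Sum>s<Suc t. mpow M0 (Suc t - 1 - s) ** (M - M0) ** mpow M s)"
    by (simp add: eq)
  finally show ?case .
qed





lemma mn_prod3: "mn (A ** B ** C) \<le> mn A * mn B * mn C"
proof -
  have "mn (A ** B ** C) \<le> mn (A ** B) * mn C" by (rule mn_mult)
  also have "\<dots> \<le> mn A * mn B * mn C" by (intro mult_right_mono mn_mult mn_nonneg)
  finally show ?thesis .
qed

lemma perturb_sum_bound:
  assumes M0: "\<And>t. mn (mpow M0 t) \<le> c * r^t" and c: "0 \<le> c" and r: "0 \<le> r"
    and Mb: "\<And>s. s < t \<Longrightarrow> mn (mpow M s) \<le> c * q^s" and q: "0 \<le> q"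
  shows "mn (\<Sum>s<t. mpow M0 (t - 1 - s) ** (M - M0) ** mpow M s)
     \<le> (\<Sum>s<t. (c * r^(t - Suc s)) * mn (M - M0) * (c * q^s))"
proof -
  have "mn (\<Sum>s<t. mpow M0 (t - 1 - s) ** (M - M0) ** mpow M s)
      \<le> (\<Sum>s<t. mn (mpow M0 (t - 1 - s) ** (M - M0) ** mpow M s))"
    by (rule mn_sum) simp
  also have "\<dots> \<le> (\<Sum>s<t. (c * r^(t - Suc s)) * mn (M - M0) * (c * q^s))"
  proof (rule sum_mono)
    fix s assume s: "s \<in> {..<t}"
    have "mn (mpow M0 (t - 1 - s) ** (M - M0) ** mpow M s)
       \<le> mn (mpow M0 (t - 1 - s)) * mn (M - M0) * mn (mpow M s)" by (rule mn_prod3)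
    also have "\<dots> \<le> (c * r^(t - Suc s)) * mn (M - M0) * (c * q^s)"
      using M0[of "t - 1 - s"] Mb[of s] s
      by (intro mult_mono mn_nonneg) (auto intro!: mult_nonneg_nonneg c r q mn_nonneg zero_le_power)
    finally show "mn (mpow M0 (t - 1 - s) ** (M - M0) ** mpow M s)
       \<le> (c * r^(t - Suc s)) * mn (M - M0) * (c * q^s)" .
  qed
  finally show ?thesis .
qed

lemma mpow_perturb_bound:
  assumes M0: "\<And>t. mn (mpow M0 t) \<le> c * r^t" and c: "0 \<le> c" and r: "0 \<le> r"
  shows "mn (mpow M t) \<le> c * (r + c * mn (M - M0))^t"
proof (induction t rule: less_induct)
  case (less t)
  define d where "d = mn (M - M0)"
  define q where "q = r + c * d"
  have d: "0 \<le> d" unfolding d_def by (rule mn_nonneg)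
  have q: "0 \<le> q" unfolding q_def using c r d by simp
  have "mn (mpow M t) \<le> mn (mpow M0 t) + mn (\<Sum>s<t. mpow M0 (t - 1 - s) ** (M - M0) ** mpow M s)"
    by (subst mpow_perturb_id[of M t M0]) (rule mn_add)
  also have "\<dots> \<le> c * r^t + (\<Sum>s<t. (c * r^(t - Suc s)) * d * (c * q^s))"
    unfolding d_def
    by (intro add_mono M0 perturb_sum_bound[OF M0 c r _ q]) (use less in \<open>simp add: q_def d_def\<close>)
  also have "(\<Sum>s<t. (c * r^(t - Suc s)) * d * (c * q^s)) = c * ((q - r) * (\<Sum>s<t. r^(t - Suc s) * q^s))"
    by (simp add: q_def sum_distrib_left algebra_simps)
  also have "\<dots> = c * (q^t - r^t)" by (simp add: power_diff_sumr2)
  finally show ?case by (simp add: q_def d_def algebra_simps)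
qed

lemma mpow_diff_bound:
  assumes M0: "\<And>t. mn (mpow M0 t) \<le> c * r^t" and c: "0 \<le> c" and r: "0 \<le> r"
  shows "mn (mpow M t - mpow M0 t) \<le> c * c * mn (M - M0) * (real t * (r + c * mn (M - M0))^(t - 1))"
proof -
  define d where "d = mn (M - M0)"
  define q where "q = r + c * d"
  have d: "0 \<le> d" unfolding d_def by (rule mn_nonneg)
  have q: "0 \<le> q" unfolding q_def using c r d by simp
  have rq: "r \<le> q" unfolding q_def using c d by simp
  have "mn (mpow M t - mpow M0 t) = mn (\<Sum>s<t. mpow M0 (t - 1 - s) ** (M - M0) ** mpow M s)"
    by (subst mpow_perturb_id[of M t M0]) simp
  also have "\<dots> \<le> (\<Sum>s<t. (c * r^(t - Suc s)) * d * (c * q^s))"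
    unfolding d_def
    by (rule perturb_sum_bound[OF M0 c r _ q]) (use mpow_perturb_bound[OF M0 c r] in \<open>simp add: q_def d_def\<close>)
  also have "\<dots> \<le> (\<Sum>s<t. c * c * d * q^(t - 1))"
  proof (rule sum_mono)
    fix s assume s: "s \<in> {..<t}"
    have "r^(t - Suc s) * q^s \<le> q^(t - Suc s) * q^s"
      by (intro mult_right_mono power_mono r rq) (simp add: q)
    also have "\<dots> = q^(t - 1)" using s by (simp add: power_add[symmetric])
    finally have "r^(t - Suc s) * q^s \<le> q^(t - 1)" .
    then have "(c * c * d) * (r^(t - Suc s) * q^s) \<le> (c * c * d) * q^(t - 1)"
      by (rule mult_left_mono[OF _ mult_nonneg_nonneg[OF mult_nonneg_nonneg[OF c c] d]])
    then show "(c * r^(t - Suc s)) * d * (c * q^s) \<le> c * c * d * q^(t - 1)"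
      by (simp add: algebra_simps)
  qed
  also have "\<dots> = c * c * d * (real t * q^(t - 1))" by simp
  finally show ?thesis by (simp add: q_def d_def)
qed




definition geo :: "real^'k::finite^'k \<Rightarrow> real \<Rightarrow> real \<Rightarrow> bool" where
  "geo M c r \<longleftrightarrow> (\<forall>t. mn (mpow M t) \<le> c * r^t) \<and> 0 \<le> c \<and> 0 \<le> r \<and> r < 1"

definition SerP :: "real^'k::finite^'k \<Rightarrow> real^'k^'k \<Rightarrow> real^'k^'k" where
  "SerP M W = (\<Sum>t. transpose (mpow M t) ** W ** mpow M t)"

lemma inner_trace: "(A::real^'n::finite^'m::finite) \<bullet> B = trace (transpose A ** B)"
  unfolding inner_vec_def trace_def matrix_matrix_mult_def transpose_def
  by (simp add: inner_real_def, rule sum.swap)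

lemma inner_sandwich:
  fixes A E X :: "real^'k::finite^'k"
  shows "(transpose A ** E ** A) \<bullet> X = E \<bullet> (A ** X ** transpose A)"
proof -
  have "(transpose A ** E ** A) \<bullet> X = trace (transpose A ** transpose E ** A ** X)"
    by (simp add: inner_trace matrix_transpose_mul matrix_mul_assoc)
  also have "\<dots> = trace (transpose E ** (A ** X ** transpose A))"
    by (metis matrix_mul_assoc trace_mul_sym)
  also have "\<dots> = E \<bullet> (A ** X ** transpose A)" by (simp add: inner_trace)
  finally show ?thesis .
qed

lemma summable_geo:
  fixes f :: "nat \<Rightarrow> real^'a::finite^'b::finite"
  assumes "\<And>t. mn (f t) \<le> K * \<rho>^t" "0 \<le> \<rho>" "\<rho> < 1"
  shows "summable f"
proof (rule summable_comparison_test')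
  show "summable (\<lambda>t. K * \<rho>^t)" using assms by (intro summable_mult summable_geometric) simp
  show "norm (f t) \<le> K * \<rho>^t" for t using norm_le_mn[of "f t"] assms(1)[of t] by linarith
qed

lemma mn_suminf_le:
  fixes f :: "nat \<Rightarrow> real^'a::finite^'b::finite"
  assumes "summable f" "\<And>t. mn (f t) \<le> g t" "summable g"
  shows "mn (suminf f) \<le> real CARD('b) * real CARD('a) * suminf g"
proof -
  have nb: "norm (f t) \<le> g t" for t by (rule order_trans[OF norm_le_mn assms(2)])
  have sn: "summable (\<lambda>t. norm (f t))"
    by (rule summable_comparison_test'[OF assms(3)]) (use nb in auto)
  have "mn (suminf f) \<le> real CARD('b) * real CARD('a) * norm (suminf f)" by (rule mn_le_norm)
  also have "norm (suminf f) \<le> suminf g"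
  proof -
    have "norm (suminf f) \<le> (\<Sum>t. norm (f t))" by (rule summable_norm[OF sn])
    also have "\<dots> \<le> suminf g"
      by (rule suminf_le[OF _ sn assms(3)]) (use nb in auto)
    finally show ?thesis .
  qed
  then have "real CARD('b) * real CARD('a) * norm (suminf f) \<le> real CARD('b) * real CARD('a) * suminf g"
    by (intro mult_left_mono) auto
  finally show ?thesis .
qed

lemma geo_term_bound:
  assumes "geo M c r"
  shows "mn (transpose (mpow M t) ** W ** mpow M t) \<le> (c * c * mn W) * (r*r)^t"
proof -
  have b: "mn (mpow M t) \<le> c * r^t" "0 \<le> c" "0 \<le> r" using assms unfolding geo_def by auto
  have "mn (transpose (mpow M t) ** W ** mpow M t) \<le> mn (mpow M t) * mn W * mn (mpow M t)"
    using mn_prod3[of "transpose (mpow M t)" W "mpow M t"] by (simp add: mn_transpose)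
  also have "\<dots> \<le> (c * r^t) * mn W * (c * r^t)"
    by (intro mult_mono b mn_nonneg mult_nonneg_nonneg) (use b in auto)
  also have "\<dots> = (c * c * mn W) * (r*r)^t" by (simp add: power_mult_distrib algebra_simps)
  finally show ?thesis .
qed

lemma geo_rr: assumes "geo M c r" shows "0 \<le> r*r" "r*r < 1"
proof -
  have r: "0 \<le> r" "r < 1" using assms by (auto simp: geo_def)
  show "0 \<le> r*r" using r by simp
  have "r * r \<le> r * 1" using r by (intro mult_left_mono) auto
  then show "r*r < 1" using r by simp
qed

lemma geo_summable:
  assumes "geo M c r"
  shows "summable (\<lambda>t. transpose (mpow M t) ** W ** mpow M t)"
  by (rule summable_geo[OF geo_term_bound[OF assms] geo_rr[OF assms]])

lemma mpow_tendsto0: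
  assumes "geo M c r"
  shows "\<And>Y. (\<lambda>t. transpose (mpow M t) ** Y ** mpow M t) \<longlonglongrightarrow> 0"
proof -
  fix Y :: "real^'a^'a"
  have r: "0 \<le> r" "r < 1" using assms by (auto simp: geo_def)
  have "(\<lambda>t. (c * c * mn Y) * (r*r)^t) \<longlonglongrightarrow> (c * c * mn Y) * 0"
    by (intro tendsto_mult tendsto_const LIMSEQ_power_zero) (use geo_rr[OF assms] in simp)
  then have lim: "(\<lambda>t. (c * c * mn Y) * (r*r)^t) \<longlonglongrightarrow> 0" by simp
  show "(\<lambda>t. transpose (mpow M t) ** Y ** mpow M t) \<longlonglongrightarrow> 0"
  proof (rule Lim_null_comparison[OF _ lim])
    show "\<forall>\<^sub>F t in sequentially. norm (transpose (mpow M t) ** Y ** mpow M t) \<le> (c * c * mn Y) * (r*r)^t"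
      using geo_term_bound[OF assms] norm_le_mn order_trans by (intro always_eventually allI) blast
  qed
qed

lemma mpow_Suc': "mpow M (Suc t) = mpow M t ** M"
  by (simp add: mpow_comm)

lemma SerP_eq:
  assumes "geo M c r"
  shows "SerP M W = W + transpose M ** SerP M W ** M"
proof -
  let ?f = "\<lambda>t. transpose (mpow M t) ** W ** mpow M t"
  have s: "summable ?f" by (rule geo_summable[OF assms])
  have "(\<Sum>t. ?f (Suc t)) = SerP M W - ?f 0"
    unfolding SerP_def by (rule suminf_split_head[OF s])
  then have "SerP M W = ?f 0 + (\<Sum>t. ?f (Suc t))" by simp
  also have "(\<Sum>t. ?f (Suc t)) = (\<Sum>t. transpose M ** ?f t ** M)"
    by (simp del: mpow.simps add: mpow_Suc' matrix_transpose_mul matrix_mul_assoc)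
  also have "\<dots> = transpose M ** SerP M W ** M"
  proof -
    have bl: "bounded_linear (\<lambda>Y::real^'a^'a. transpose M ** Y ** M)"
      by (intro linear_conv_bounded_linear[THEN iffD1] linearI)
         (simp_all add: matrix_add_ldistrib matrix_add_rdistrib matrix_scalar_ac scalar_matrix_assoc)
    show ?thesis unfolding SerP_def using bounded_linear.suminf[OF bl s] by simp
  qed
  finally show ?thesis by simp
qed

lemma SerP_unique:
  assumes "geo M c r" and Y: "Y = W + transpose M ** Y ** M"
  shows "Y = SerP M W"
proof -
  define D where "D = Y - SerP M W"
  have "D = (W + transpose M ** Y ** M) - (W + transpose M ** SerP M W ** M)"
    unfolding D_def using Y SerP_eq[OF assms(1), of W] by simp
  also have "\<dots> = transpose M ** D ** M" unfolding D_def by (simp add: mdist)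
  finally have D: "D = transpose M ** D ** M" .
  have Dt: "D = transpose (mpow M t) ** D ** mpow M t" for t
  proof (induction t)
    case 0 then show ?case by simp
  next
    case (Suc t)
    have "transpose (mpow M (Suc t)) ** D ** mpow M (Suc t)
        = transpose (mpow M t) ** (transpose M ** D ** M) ** mpow M t"
      by (simp add: matrix_transpose_mul matrix_mul_assoc)
    also have "\<dots> = transpose (mpow M t) ** D ** mpow M t" by (simp only: D[symmetric])
    finally show ?case using Suc.IH by simp
  qed
  have "(\<lambda>t. D) \<longlonglongrightarrow> 0"
    using mpow_tendsto0[OF assms(1), of D] by (subst (asm) Dt[symmetric]) 
  then have "D = 0" by (simp add: LIMSEQ_const_iff)
  then show ?thesis unfolding D_def by simp
qed




lemma bl_transpose: "bounded_linear (transpose :: real^'a::finite^'b::finite \<Rightarrow> real^'b^'a)"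
  by (intro linear_conv_bounded_linear[THEN iffD1] linearI)
     (simp_all add: transpose_def Finite_Cartesian_Product.vec_eq_iff)

lemma bl_quad: "bounded_linear (\<lambda>A::real^'k::finite^'k. z \<bullet> (A *v z))"
  by (intro linear_conv_bounded_linear[THEN iffD1] linearI)
     (simp_all add: matrix_vector_mult_add_rdistrib inner_add_right scaleR_matrix_vector_assoc[symmetric])

lemma bl_sandwich: "bounded_linear (\<lambda>Y::real^'k::finite^'k. transpose M ** Y ** M)"
  by (intro linear_conv_bounded_linear[THEN iffD1] linearI)
     (simp_all add: matrix_add_ldistrib matrix_add_rdistrib matrix_scalar_ac scalar_matrix_assoc)

lemma inner_transpose_mv: "x \<bullet> (transpose A *v y) = (A *v x) \<bullet> (y::real^'k::finite)"
  by (metis dot_lmul_matrix inner_commute transpose_matrix_vector)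

lemma quad_sandwich: "z \<bullet> ((transpose A ** W ** A) *v z) = (A *v z) \<bullet> (W *v (A *v (z::real^'n::finite)))"
  by (simp only: matrix_vector_mul_assoc[symmetric]) (rule inner_transpose_mv)

lemma SerP_quad:
  assumes "geo M c r"
  shows "(\<lambda>t. (mpow M t *v z) \<bullet> (W *v (mpow M t *v z))) sums (z \<bullet> (SerP M W *v z))"
proof -
  have "(\<lambda>t. z \<bullet> ((transpose (mpow M t) ** W ** mpow M t) *v z)) sums (z \<bullet> (SerP M W *v z))"
    unfolding SerP_def by (rule bounded_linear.sums[OF bl_quad summable_sums[OF geo_summable[OF assms]]])
  then show ?thesis by (simp add: quad_sandwich)
qed

lemma SerP_psd:
  assumes "geo M c r" "psd_mat W"
  shows "psd_mat (SerP M W)"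
  unfolding psd_mat_def
proof
  have "transpose (SerP M W) = (\<Sum>t. transpose (transpose (mpow M t) ** W ** mpow M t))"
    unfolding SerP_def by (rule bounded_linear.suminf[OF bl_transpose geo_summable[OF assms(1)]])
  also have "\<dots> = SerP M W"
    using assms(2) unfolding SerP_def psd_mat_def by (simp add: matrix_transpose_mul matrix_mul_assoc)
  finally show "transpose (SerP M W) = SerP M W" .
  show "\<forall>x. 0 \<le> x \<bullet> (SerP M W *v x)"
  proof
    fix x
    show "0 \<le> x \<bullet> (SerP M W *v x)"
    proof (rule sums_le[OF _ sums_zero SerP_quad[OF assms(1)]])
      fix t
      show "0 \<le> (mpow M t *v x) \<bullet> (W *v (mpow M t *v x))"
        using assms(2) unfolding psd_mat_def by blast
    qed
  qed
qed

lemma SerP_telescope: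
  assumes "geo M c r"
  shows "SerP M (W + transpose M ** P ** M - P) = SerP M W - P"
proof -
  let ?f = "\<lambda>t. transpose (mpow M t) ** W ** mpow M t"
  let ?g = "\<lambda>t. transpose (mpow M t) ** P ** mpow M t"
  have trm: "transpose (mpow M t) ** (W + transpose M ** P ** M - P) ** mpow M t = ?f t + (?g (Suc t) - ?g t)" for t
    by (simp add: mdist matrix_transpose_mul matrix_mul_assoc)
  have "(\<lambda>t. ?g (Suc t) - ?g t) sums (0 - ?g 0)"
    by (rule telescope_sums[OF mpow_tendsto0[OF assms]])
  then have "(\<lambda>t. ?f t + (?g (Suc t) - ?g t)) sums (SerP M W + (0 - ?g 0))"
    unfolding SerP_def by (intro sums_add summable_sums geo_summable[OF assms])
  then show ?thesis unfolding trm[symmetric] SerP_def[of M "W + transpose M ** P ** M - P"]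
    by (simp add: sums_iff)
qed

lemma mpow_transpose: "mpow (transpose M) t = transpose (mpow M t)"
proof (induction t)
  case 0 then show ?case by simp
next
  case (Suc t)
  have "mpow (transpose M) (Suc t) = transpose M ** transpose (mpow M t)" using Suc by simp
  also have "\<dots> = transpose (mpow M t ** M)" by (simp add: matrix_transpose_mul)
  also have "\<dots> = transpose (mpow M (Suc t))" by (simp add: mpow_comm)
  finally show ?case .
qed

lemma geo_transpose: "geo M c r \<Longrightarrow> geo (transpose M) c r"
  unfolding geo_def by (simp add: mpow_transpose mn_transpose)

lemma SerP_inner:
  assumes "geo M c r"
  shows "SerP M E \<bullet> X = E \<bullet> SerP (transpose M) X"
proof -
  have "SerP M E \<bullet> X = (\<Sum>t. (transpose (mpow M t) ** E ** mpow M t) \<bullet> X)"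
    unfolding SerP_def by (rule bounded_linear.suminf[OF bounded_linear_inner_left geo_summable[OF assms]])
  also have "\<dots> = (\<Sum>t. E \<bullet> (transpose (mpow (transpose M) t) ** X ** mpow (transpose M) t))"
    by (simp add: inner_sandwich mpow_transpose)
  also have "\<dots> = E \<bullet> SerP (transpose M) X"
    unfolding SerP_def
    by (rule bounded_linear.suminf[OF bounded_linear_inner_right geo_summable[OF geo_transpose[OF assms]], symmetric])
  finally show ?thesis .
qed




lemma sum_UNIV_plus:
  "(\<Sum>x\<in>(UNIV::('a::finite + 'b::finite) set). f x) = (\<Sum>a\<in>UNIV. f (Inl a)) + (\<Sum>b\<in>UNIV. f (Inr b))"
proof -
  have "(\<Sum>x\<in>(UNIV::('a + 'b) set). f x) = (\<Sum>x\<in>(UNIV <+> UNIV). f x)" by simp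
  also have "\<dots> = (\<Sum>a\<in>UNIV. f (Inl a)) + (\<Sum>b\<in>UNIV. f (Inr b))"
    by (simp only: sum.Plus[OF finite finite] comp_def)
  finally show ?thesis .
qed

definition Wm :: "real^'n::finite^'n \<Rightarrow> real^'m::finite^'m \<Rightarrow> real^'n^'m \<Rightarrow> real^('n+'n)^('n+'n)" where
  "Wm Q R CK = Qbar Q + transpose Fsel ** transpose CK ** R ** CK ** Fsel"

lemma xipart_Fsel: "xipart xb = (Fsel :: real^('n::finite+'n)^'n) *v xb"
  unfolding xipart_def Fsel_def matrix_vector_mult_def
  by (simp add: Finite_Cartesian_Product.vec_eq_iff sum_UNIV_plus if_distrib if_distribR cong: if_cong)

lemma Qbar_quad: "xb \<bullet> (Qbar Q *v xb) = xpart xb \<bullet> (Q *v xpart (xb::real^('n::finite+'n)))"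
  unfolding Qbar_def blk_def xpart_def matrix_vector_mult_def inner_vec_def
  by (simp add: sum_UNIV_plus)

lemma Wm_quad:
  "xb \<bullet> (Wm Q R CK *v xb) = xpart xb \<bullet> (Q *v xpart xb) + (CK *v xipart xb) \<bullet> (R *v (CK *v xipart (xb::real^('n::finite+'n))))"
proof -
  have "transpose Fsel ** transpose CK ** R ** CK ** Fsel = transpose (CK ** Fsel) ** R ** (CK ** Fsel)"
    by (simp add: matrix_transpose_mul matrix_mul_assoc)
  then have "xb \<bullet> ((transpose Fsel ** transpose CK ** R ** CK ** Fsel) *v xb)
      = ((CK ** Fsel) *v xb) \<bullet> (R *v ((CK ** Fsel) *v xb))"
    by (simp only: quad_sandwich)
  then show ?thesis unfolding Wm_def
    by (simp add: matrix_vector_mult_add_rdistrib inner_add_right Qbar_quad xipart_Fsel matrix_vector_mul_assoc[symmetric])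
qed

lemma meas_prod:
  assumes "sets D = sets borel"
  shows "(\<lambda>z::real^'k::finite. z$i * z$j) \<in> borel_measurable D"
proof -
  have "(\<lambda>z::real^'k. z$i * z$j) \<in> borel_measurable borel"
    by (intro borel_measurable_continuous_onI continuous_intros)
  then show ?thesis using measurable_cong_sets[OF assms refl] by blast
qed

lemma integrable_prod:
  assumes "sets D = sets borel" "integrable D (\<lambda>z. norm z ^ 2)"
  shows "integrable D (\<lambda>z::real^'k::finite. z$i * z$j)"
proof (rule Bochner_Integration.integrable_bound[OF assms(2) meas_prod[OF assms(1)]])
  show "AE z in D. norm (z$i * z$j) \<le> norm (norm z ^ 2)"
  proof (intro AE_I2)
    fix z :: "real^'k"
    have "\<bar>z$i\<bar> * \<bar>z$j\<bar> \<le> norm z * norm z"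
      by (intro mult_mono component_le_norm_cart) auto
    then show "norm (z$i * z$j) \<le> norm (norm z ^ 2)" by (simp add: abs_mult power2_eq_square)
  qed
qed

lemma quad_expand: "z \<bullet> (Y *v z) = (\<Sum>i\<in>UNIV. \<Sum>j\<in>UNIV. Y$i$j * (z$i * (z::real^'k::finite)$j))"
  unfolding inner_vec_def matrix_vector_mult_def
  by (simp add: sum_distrib_left mult_ac)

lemma int_quad:
  fixes D :: "(real^('n::finite+'n)) measure"
  assumes "sets D = sets borel" "integrable D (\<lambda>z. norm z ^ 2)"
  shows "integrable D (\<lambda>z. z \<bullet> (Y *v z))" "(\<integral>z. z \<bullet> (Y *v z) \<partial>D) = Y \<bullet> Xmom D"
proof -
  note ip = integrable_prod[OF assms]
  show "integrable D (\<lambda>z. z \<bullet> (Y *v z))" unfolding quad_expand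
    by (simp add: ip)
  have "(\<integral>z. z \<bullet> (Y *v z) \<partial>D) = (\<Sum>i\<in>UNIV. \<Sum>j\<in>UNIV. Y$i$j * (\<integral>z. z$i * z$j \<partial>D))"
    unfolding quad_expand
    by (simp add: integral_sum integrable_sum integrable_mult_right ip)
  also have "\<dots> = Y \<bullet> Xmom D"
    unfolding inner_vec_def Xmom_def by (simp add: inner_real_def)
  finally show "(\<integral>z. z \<bullet> (Y *v z) \<partial>D) = Y \<bullet> Xmom D" .
qed

lemma Xmom_psd:
  assumes "sets D = sets borel" "integrable D (\<lambda>z. norm z ^ 2)"
  shows "psd_mat (Xmom (D :: (real^('n::finite+'n)) measure))"
  unfolding psd_mat_def
proof
  show "transpose (Xmom D) = Xmom D"
    unfolding transpose_def Xmom_def by (simp add: Finite_Cartesian_Product.vec_eq_iff mult.commute)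
  show "\<forall>x. 0 \<le> x \<bullet> (Xmom D *v x)"
  proof
    fix x :: "real^('n+'n)"
    define Y :: "real^('n+'n)^('n+'n)" where "Y = (\<chi> i j. x$i * x$j)"
    have "x \<bullet> (Xmom D *v x) = Y \<bullet> Xmom D"
      unfolding Y_def quad_expand
      by (simp add: inner_vec_def inner_real_def matrix_vector_mult_def sum_distrib_left mult_ac)
    also have "\<dots> = (\<integral>z. z \<bullet> (Y *v z) \<partial>D)" by (rule int_quad(2)[OF assms, symmetric])
    also have "\<dots> = (\<integral>z. (x \<bullet> z)^2 \<partial>D)"
      unfolding Y_def quad_expand
      by (simp add: inner_vec_def power2_eq_square sum_product mult_ac)
    also have "\<dots> \<ge> 0" by simp
    finally show "0 \<le> x \<bullet> (Xmom D *v x)" .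
  qed
qed

lemma J_formula:
  assumes "sets D = sets borel" "integrable D (\<lambda>z. norm z ^ 2)"
    and g: "geo (Acl A B C aK bK cK) c r"
  shows "Jcost D A B C Q R (aK, bK, cK) = SerP (Acl A B C aK bK cK) (Wm Q R cK) \<bullet> Xmom D"
proof -
  let ?M = "Acl A B C aK bK cK"
  have pt: "(\<Sum>t. (let xb = traj ?M z t; x = xpart xb; u = cK *v xipart xb
                          in x \<bullet> (Q *v x) + u \<bullet> (R *v u))) = z \<bullet> (SerP ?M (Wm Q R cK) *v z)" for z
  proof -
    have "(\<lambda>t. (let xb = traj ?M z t; x = xpart xb; u = cK *v xipart xb
                          in x \<bullet> (Q *v x) + u \<bullet> (R *v u))) =
          (\<lambda>t. (mpow ?M t *v z) \<bullet> (Wm Q R cK *v (mpow ?M t *v z)))"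
      by (simp add: Wm_quad traj_mpow Let_def)
    then show ?thesis using sums_unique[OF SerP_quad[OF g, of z "Wm Q R cK"]] by simp
  qed
  have "Jcost D A B C Q R (aK, bK, cK) = (\<integral>z. z \<bullet> (SerP ?M (Wm Q R cK) *v z) \<partial>D)"
    unfolding Jcost_def by (simp only: pt prod.case)
  also have "\<dots> = SerP ?M (Wm Q R cK) \<bullet> Xmom D" by (rule int_quad(2)[OF assms(1,2)])
  finally show ?thesis .
qed




lemma transpose_add: "transpose (A + B) = transpose A + transpose (B::real^'a::finite^'b::finite)"
  by (simp add: transpose_def Finite_Cartesian_Product.vec_eq_iff)
lemma transpose_diff: "transpose (A - B) = transpose A - transpose (B::real^'a::finite^'b::finite)"
  by (simp add: transpose_def Finite_Cartesian_Product.vec_eq_iff)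
lemma transpose_zero: "transpose (0::real^'a::finite^'b::finite) = 0"
  by (simp add: transpose_def Finite_Cartesian_Product.vec_eq_iff)

lemma SerP_T: "SerP (transpose M) X = (\<Sum>t. mpow M t ** X ** transpose (mpow M t))"
  unfolding SerP_def by (simp add: mpow_transpose)

lemma sandwich_diff:
  fixes A B X :: "real^'k::finite^'k"
  shows "A ** X ** transpose A - B ** X ** transpose B = (A - B) ** X ** transpose A + B ** X ** transpose (A - B)"
  by (simp add: mdist transpose_diff)

lemma summable_tq:
  assumes "0 \<le> q" "q < 1"
  shows "summable (\<lambda>t. real t * q^(t - 1))"
proof -
  have "summable (\<lambda>n. diffs (\<lambda>_. 1::real) n * q ^ n)"
    by (rule termdiff_converges[where K=1]) (use assms in \<open>auto intro: summable_geometric\<close>)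
  then have "summable (\<lambda>n. real (Suc n) * q^(Suc n - 1))" by (simp add: diffs_def)
  then show ?thesis by (subst summable_Suc_iff[symmetric])
qed

lemma perturb_all:
  fixes M0 X :: "real^'k::finite^'k"
  assumes g: "geo M0 c s" and c: "0 < c"
  shows "\<exists>K1 K2. \<forall>M. mn (M - M0) \<le> (1 - s) / (2 * c) \<longrightarrow>
     geo M c ((1 + s) / 2) \<and>
     mn (SerP (transpose M) X - SerP (transpose M0) X) \<le> K1 * mn (M - M0) \<and>
     mn (SerP (transpose M) X) \<le> K2"
proof -
  define q1 where "q1 = (1 + s) / 2"
  have s: "0 \<le> s" "s < 1" and M0b: "\<And>t. mn (mpow M0 t) \<le> c * s^t" using g by (auto simp: geo_def)
  have q1: "0 \<le> q1" "q1 < 1" "s \<le> q1" using s unfolding q1_def by auto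
  define N where "N = real CARD('k) * real CARD('k)"
  define T where "T = (\<Sum>t. real t * q1^(t - 1))"
  define K1 where "K1 = N * (2 * c * c * c * mn X * T)"
  define K2 where "K2 = N * (\<Sum>t. (c * c * mn X) * (q1 * q1)^t)"
  have "\<forall>M. mn (M - M0) \<le> (1 - s) / (2 * c) \<longrightarrow>
     geo M c q1 \<and>
     mn (SerP (transpose M) X - SerP (transpose M0) X) \<le> K1 * mn (M - M0) \<and>
     mn (SerP (transpose M) X) \<le> K2"
  proof (intro allI impI)
    fix M :: "real^'k^'k"
    assume dM: "mn (M - M0) \<le> (1 - s) / (2 * c)"
    define d where "d = mn (M - M0)"
    have d0: "0 \<le> d" unfolding d_def by (rule mn_nonneg)
    have cd: "c * d \<le> (1 - s) / 2" using dM c unfolding d_def by (simp add: field_simps)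
    have qq: "s + c * d \<le> q1" using cd unfolding q1_def by simp
    have qq0: "0 \<le> s + c * d" using s c d0 by simp
    have Mb: "mn (mpow M t) \<le> c * q1^t" for t
    proof -
      have "mn (mpow M t) \<le> c * (s + c * d)^t" unfolding d_def
        by (rule mpow_perturb_bound[OF M0b]) (use c s in auto)
      also have "\<dots> \<le> c * q1^t" using c qq qq0 by (intro mult_left_mono power_mono) auto
      finally show ?thesis .
    qed
    have gM: "geo M c q1" unfolding geo_def using Mb c q1 by auto
    have gMT: "geo (transpose M) c q1" by (rule geo_transpose[OF gM])
    have gM0T: "geo (transpose M0) c s" by (rule geo_transpose[OF g])
    let ?f = "\<lambda>t. mpow M t ** X ** transpose (mpow M t) - mpow M0 t ** X ** transpose (mpow M0 t)"
    have sM: "summable (\<lambda>t. mpow M t ** X ** transpose (mpow M t))"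
      using geo_summable[OF gMT, of X] by (simp add: mpow_transpose)
    have sM0: "summable (\<lambda>t. mpow M0 t ** X ** transpose (mpow M0 t))"
      using geo_summable[OF gM0T, of X] by (simp add: mpow_transpose)
    have eqd: "SerP (transpose M) X - SerP (transpose M0) X = suminf ?f"
      unfolding SerP_T by (rule suminf_diff[OF sM sM0])
    have fb: "mn (?f t) \<le> (2 * c * c * c * mn X * d) * (real t * q1^(t - 1))" for t
    proof -
      have ab: "mn (mpow M t - mpow M0 t) \<le> c * c * d * (real t * q1^(t - 1))"
      proof -
        have "mn (mpow M t - mpow M0 t) \<le> c * c * d * (real t * (s + c * d)^(t - 1))"
          unfolding d_def by (rule mpow_diff_bound[OF M0b]) (use c s in auto)
        also have "\<dots> \<le> c * c * d * (real t * q1^(t - 1))"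
          using c d0 qq qq0 by (intro mult_left_mono power_mono) auto
        finally show ?thesis .
      qed
      have a1: "mn (mpow M t) \<le> c" using Mb[of t] q1 c
        by (meson mult_left_le order_trans power_le_one less_imp_le)
      have b1: "mn (mpow M0 t) \<le> c" using M0b[of t] s c
        by (meson mult_left_le order_trans power_le_one less_imp_le)
      have "mn (?f t) \<le> mn ((mpow M t - mpow M0 t) ** X ** transpose (mpow M t))
           + mn (mpow M0 t ** X ** transpose (mpow M t - mpow M0 t))"
        by (subst sandwich_diff) (rule mn_add)
      also have "\<dots> \<le> mn (mpow M t - mpow M0 t) * mn X * mn (mpow M t)
           + mn (mpow M0 t) * mn X * mn (mpow M t - mpow M0 t)"
        by (intro add_mono) (metis mn_prod3 mn_transpose)+
      also have "\<dots> \<le> (c * c * d * (real t * q1^(t - 1))) * mn X * c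
           + c * mn X * (c * c * d * (real t * q1^(t - 1)))"
        by (intro add_mono mult_mono ab a1 b1 mn_nonneg mult_nonneg_nonneg order_refl)
           (use c d0 q1 in auto)
      also have "\<dots> = (2 * c * c * c * mn X * d) * (real t * q1^(t - 1))" by (simp add: algebra_simps)
      finally show ?thesis .
    qed
    have sg: "summable (\<lambda>t. (2 * c * c * c * mn X * d) * (real t * q1^(t - 1)))"
      by (intro summable_mult summable_tq q1)
    have "mn (SerP (transpose M) X - SerP (transpose M0) X)
        \<le> N * (\<Sum>t. (2 * c * c * c * mn X * d) * (real t * q1^(t - 1)))"
      unfolding eqd N_def by (rule mn_suminf_le[OF summable_diff[OF sM sM0] fb sg])
    also have "\<dots> = K1 * d" unfolding K1_def T_def
      using suminf_mult[OF summable_tq[OF q1(1,2)], of "2 * c * c * c * mn X * d"] by simp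
    finally have D1: "mn (SerP (transpose M) X - SerP (transpose M0) X) \<le> K1 * mn (M - M0)"
      unfolding d_def .
    have D2: "mn (SerP (transpose M) X) \<le> K2"
      unfolding SerP_def K2_def N_def
      by (rule mn_suminf_le[OF geo_summable[OF gMT] geo_term_bound[OF gMT]])
         (intro summable_mult summable_geometric, use geo_rr[OF gM] in simp)
    show "geo M c q1 \<and> mn (SerP (transpose M) X - SerP (transpose M0) X) \<le> K1 * mn (M - M0) \<and>
       mn (SerP (transpose M) X) \<le> K2" using gM D1 D2 by blast
  qed
  then show ?thesis unfolding q1_def by blast
qed




definition blk21 :: "real^('c1::finite + 'c2::finite)^('r1::finite + 'r2::finite) \<Rightarrow> real^'c1^'r2" where
  "blk21 M = (\<chi> i j. M $ Inr i $ Inl j)"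

lemma blk_add: "blk a b c d + blk a' b' c' d' = blk (a + a') (b + b') (c + c') (d + d')"
  unfolding blk_def by (simp add: Finite_Cartesian_Product.vec_eq_iff split: sum.split)

lemma blk_scale: "k *\<^sub>R blk a b c d = blk (k *\<^sub>R a) (k *\<^sub>R b) (k *\<^sub>R c) (k *\<^sub>R d)"
  unfolding blk_def by (simp add: Finite_Cartesian_Product.vec_eq_iff split: sum.split)

lemma blk_zero: "blk 0 0 0 0 = 0"
  unfolding blk_def by (simp add: Finite_Cartesian_Product.vec_eq_iff split: sum.split)

lemma blk_mult:
  "blk a b c d ** blk e f g h = blk (a ** e + b ** g) (a ** f + b ** h) (c ** e + d ** g) (c ** f + d ** h)"
  unfolding blk_def matrix_matrix_mult_def
  by (simp add: Finite_Cartesian_Product.vec_eq_iff sum_UNIV_plus split: sum.split)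

lemma blk_transpose: "transpose (blk a b c d) = blk (transpose a) (transpose c) (transpose b) (transpose d)"
  unfolding blk_def transpose_def
  by (simp add: Finite_Cartesian_Product.vec_eq_iff split: sum.split)

lemma blk_inner: "blk a b c d \<bullet> blk e f g h = a \<bullet> e + b \<bullet> f + c \<bullet> g + d \<bullet> h"
  unfolding blk_def inner_vec_def by (simp add: sum_UNIV_plus)

lemma blk_eta: "M = blk (blk11 M) (blk12 M) (blk21 M) (blk22 M)"
  unfolding blk_def blk11_def blk12_def blk21_def blk22_def
  by (simp add: Finite_Cartesian_Product.vec_eq_iff split: sum.split)

lemma blk_sel: "blk11 (blk a b c d) = a" "blk12 (blk a b c d) = b" "blk21 (blk a b c d) = c" "blk22 (blk a b c d) = d"
  unfolding blk_def blk11_def blk12_def blk21_def blk22_def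
  by (simp_all add: Finite_Cartesian_Product.vec_eq_iff)

lemma sym_entry: "transpose M = M \<Longrightarrow> M $ a $ b = M $ b $ a"
  by (metis transpose_def vec_lambda_beta)

lemma blk21_sym: "transpose M = M \<Longrightarrow> blk21 M = transpose (blk12 M)"
  unfolding blk21_def blk12_def transpose_def
  by (simp add: Finite_Cartesian_Product.vec_eq_iff sym_entry[of M "Inr _" "Inl _"])

lemma blk22_sym: "transpose M = M \<Longrightarrow> transpose (blk22 M) = blk22 M"
  unfolding blk22_def transpose_def
  by (simp add: Finite_Cartesian_Product.vec_eq_iff sym_entry[of M "Inr _" "Inr _"])

lemma Kmat_blk: "Kmat AK BK CK = blk 0 CK BK AK" by (simp add: Kmat_def)

lemma Kmat_add: "Kmat (a + a') (b + b') (c + c') = Kmat a b c + Kmat a' b' c'"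
  unfolding Kmat_def by (simp add: blk_add)

lemma Kmat_scale: "Kmat (k *\<^sub>R a) (k *\<^sub>R b) (k *\<^sub>R c) = k *\<^sub>R Kmat a b c"
  unfolding Kmat_def by (simp add: blk_scale)

lemma Fsel_sandwich: "transpose Fsel ** Y ** Fsel = blk 0 0 0 (Y::real^'n::finite^'n)"
  unfolding Fsel_def blk_def matrix_matrix_mult_def transpose_def
  by (simp add: Finite_Cartesian_Product.vec_eq_iff sum_UNIV_plus if_distrib if_distribR cong: if_cong split: sum.split)

lemma Fsel_sandwich2: "Fsel ** Y ** transpose Fsel = blk22 (Y::real^('n::finite+'n)^('n+'n))"
  unfolding Fsel_def blk22_def matrix_matrix_mult_def transpose_def
  by (simp add: Finite_Cartesian_Product.vec_eq_iff sum_UNIV_plus if_distrib if_distribR cong: if_cong split: sum.split)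

lemma inner_move_left: "(X ** Y) \<bullet> Z = Y \<bullet> (transpose X ** (Z::real^'a::finite^'b::finite))"
  by (simp add: inner_trace matrix_transpose_mul matrix_mul_assoc)

lemma inner_move_right: "(Y ** W) \<bullet> Z = Y \<bullet> (Z ** transpose (W::real^'a::finite^'c::finite))"
proof -
  have "(Y ** W) \<bullet> Z = trace (transpose W ** (transpose Y ** Z))"
    by (simp add: inner_trace matrix_transpose_mul matrix_mul_assoc)
  also have "\<dots> = trace ((transpose Y ** Z) ** transpose W)" by (rule trace_mul_sym)
  also have "\<dots> = Y \<bullet> (Z ** transpose W)" by (simp add: inner_trace matrix_mul_assoc)
  finally show ?thesis .
qed

lemma inner_transpose_sym: "transpose S = S \<Longrightarrow> transpose X \<bullet> S = X \<bullet> (S::real^'a::finite^'a)"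
proof -
  assume S: "transpose S = S"
  have "transpose X \<bullet> S = trace (X ** S)" by (simp add: inner_trace)
  also have "\<dots> = trace (S ** X)" by (rule trace_mul_sym)
  also have "\<dots> = S \<bullet> X" by (simp add: inner_trace S)
  finally show ?thesis by (simp add: inner_commute)
qed





lemma Acl_blk: "Acl A B C AK BK CK = blk A (B ** CK) (BK ** C) AK"
  unfolding Acl_def Abar_def Bbar_def Cbar_def Kmat_def
  by (simp add: blk_mult blk_add)

lemma dM_blk: "Bbar B ** Kmat dA dB dC ** Cbar C = blk 0 (B ** dC) (dB ** C) dA"
  unfolding Bbar_def Cbar_def Kmat_def
  by (simp add: blk_mult)

lemma sym_blk: "transpose P = P \<Longrightarrow> P = blk (blk11 P) (blk12 P) (transpose (blk12 P)) (blk22 P)"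
  using blk_eta[of P] blk21_sym[of P] by simp

lemma Y_blocks:
  fixes A :: "real^'n::finite^'n" and B :: "real^'m::finite^'n" and C :: "real^'n^'d::finite"
    and AK :: "real^'n^'n" and BK :: "real^'d^'n" and CK :: "real^'n^'m"
    and P S :: "real^('n+'n)^('n+'n)"
  assumes P: "transpose P = P" and S: "transpose S = S"
  defines "Y \<equiv> transpose (Bbar B) ** P ** Acl A B C AK BK CK ** S ** transpose (Cbar C)"
  shows "blk12 Y = transpose B ** (blk11 P ** A + blk12 P ** BK ** C) ** blk12 S
                  + (transpose B ** blk11 P ** B ** CK + transpose B ** blk12 P ** AK) ** blk22 S"
    and "blk21 Y = (transpose (blk12 P) ** A + blk22 P ** BK ** C) ** blk11 S ** transpose C
                  + (transpose (blk12 P) ** B ** CK + blk22 P ** AK) ** transpose (blk12 S) ** transpose C"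
    and "blk22 Y = (transpose (blk12 P) ** B ** CK + blk22 P ** AK) ** blk22 S
                  + (transpose (blk12 P) ** A + blk22 P ** BK ** C) ** blk12 S"
proof -
  have Yb: "Y = transpose (blk B 0 0 (Finite_Cartesian_Product.mat 1))
      ** blk (blk11 P) (blk12 P) (transpose (blk12 P)) (blk22 P)
      ** blk A (B ** CK) (BK ** C) AK
      ** blk (blk11 S) (blk12 S) (transpose (blk12 S)) (blk22 S)
      ** transpose (blk C 0 0 (Finite_Cartesian_Product.mat 1))"
    unfolding Y_def Acl_blk Bbar_def Cbar_def using sym_blk[OF P] sym_blk[OF S] by metis
  show "blk12 Y = transpose B ** (blk11 P ** A + blk12 P ** BK ** C) ** blk12 S
                  + (transpose B ** blk11 P ** B ** CK + transpose B ** blk12 P ** AK) ** blk22 S"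
    unfolding Yb by (simp add: blk_transpose blk_mult blk_sel mdist matrix_mul_assoc transpose_zero add_ac)
  show "blk21 Y = (transpose (blk12 P) ** A + blk22 P ** BK ** C) ** blk11 S ** transpose C
                  + (transpose (blk12 P) ** B ** CK + blk22 P ** AK) ** transpose (blk12 S) ** transpose C"
    unfolding Yb by (simp add: blk_transpose blk_mult blk_sel mdist matrix_mul_assoc transpose_zero add_ac)
  show "blk22 Y = (transpose (blk12 P) ** B ** CK + blk22 P ** AK) ** blk22 S
                  + (transpose (blk12 P) ** A + blk22 P ** BK ** C) ** blk12 S"
    unfolding Yb by (simp add: blk_transpose blk_mult blk_sel mdist matrix_mul_assoc transpose_zero add_ac)
qed




definition dMf :: "real^'m::finite^'n::finite \<Rightarrow> real^'n^'d::finite \<Rightarrow> real^'n^'n \<Rightarrow> real^'d^'n \<Rightarrow> real^'n^'m \<Rightarrow> real^('n+'n)^('n+'n)" where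
  "dMf B C dA dB dC = Bbar B ** Kmat dA dB dC ** Cbar C"

definition E1f where
  "E1f A B C R AK BK CK P dA dB dC =
     transpose Fsel ** (transpose dC ** R ** CK + transpose CK ** R ** dC) ** Fsel
     + transpose (dMf B C dA dB dC) ** P ** Acl A B C AK BK CK
     + transpose (Acl A B C AK BK CK) ** P ** dMf B C dA dB dC"

lemma grad_identity:
  fixes A :: "real^'n::finite^'n" and B :: "real^'m::finite^'n" and C :: "real^'n^'d::finite"
    and R :: "real^'m^'m"
    and AK dA :: "real^'n^'n" and BK dB :: "real^'d^'n" and CK dC :: "real^'n^'m"
    and P S :: "real^('n+'n)^('n+'n)"
  assumes P: "transpose P = P" and S: "transpose S = S" and R: "transpose R = R"
  shows "E1f A B C R AK BK CK P dA dB dC \<bullet> S =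
     (2 *\<^sub>R ((transpose (blk12 P) ** B ** CK + blk22 P ** AK) ** blk22 S)
                + 2 *\<^sub>R ((transpose (blk12 P) ** A + blk22 P ** BK ** C) ** blk12 S)) \<bullet> dA
   + (2 *\<^sub>R ((transpose (blk12 P) ** A + blk22 P ** BK ** C) ** blk11 S ** transpose C)
                + 2 *\<^sub>R ((transpose (blk12 P) ** B ** CK + blk22 P ** AK) ** transpose (blk12 S) ** transpose C)) \<bullet> dB
   + (2 *\<^sub>R (transpose B ** (blk11 P ** A + blk12 P ** BK ** C) ** blk12 S)
                + 2 *\<^sub>R (((R + transpose B ** blk11 P ** B) ** CK + transpose B ** blk12 P ** AK) ** blk22 S)) \<bullet> dC"
proof -
  let ?M0 = "Acl A B C AK BK CK"
  let ?dM = "dMf B C dA dB dC"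
  define Y where "Y = transpose (Bbar B) ** P ** Acl A B C AK BK CK ** S ** transpose (Cbar C)"
  note Yb = Y_blocks[OF P S, of B A C AK BK CK, folded Y_def]
  have S22: "transpose (blk22 S) = blk22 S" by (rule blk22_sym[OF S])
  have T1: "(transpose Fsel ** (transpose dC ** R ** CK + transpose CK ** R ** dC) ** Fsel) \<bullet> S
      = 2 * (dC \<bullet> (R ** CK ** blk22 S))"
  proof -
    have "(transpose Fsel ** (transpose dC ** R ** CK + transpose CK ** R ** dC) ** Fsel) \<bullet> S
        = (transpose dC ** R ** CK + transpose CK ** R ** dC) \<bullet> (Fsel ** S ** transpose Fsel)"
    proof -
      let ?Z = "transpose dC ** R ** CK + transpose CK ** R ** dC"
      have "(transpose Fsel ** ?Z ** Fsel) \<bullet> S = (transpose Fsel ** ?Z) \<bullet> (S ** transpose Fsel)"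
        by (rule inner_move_right)
      also have "\<dots> = ?Z \<bullet> (transpose (transpose Fsel) ** (S ** transpose Fsel))"
        by (rule inner_move_left)
      also have "\<dots> = ?Z \<bullet> (Fsel ** S ** transpose Fsel)" by (simp add: matrix_mul_assoc)
      finally show ?thesis .
    qed
    also have "\<dots> = (transpose dC ** R ** CK) \<bullet> blk22 S + (transpose CK ** R ** dC) \<bullet> blk22 S"
      by (simp add: Fsel_sandwich2 inner_add_left)
    also have "(transpose dC ** R ** CK) \<bullet> blk22 S = (transpose CK ** R ** dC) \<bullet> blk22 S"
    proof -
      have "transpose dC ** R ** CK = transpose (transpose CK ** R ** dC)"
        by (simp add: matrix_transpose_mul matrix_mul_assoc R)
      then show ?thesis using inner_transpose_sym[OF S22] by simp
    qed
    also have "(transpose CK ** R ** dC) \<bullet> blk22 S = dC \<bullet> (R ** CK ** blk22 S)"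
      by (simp add: inner_move_left matrix_transpose_mul R matrix_mul_assoc)
    finally show ?thesis by simp
  qed
  have T3: "(transpose ?M0 ** P ** ?dM) \<bullet> S = dC \<bullet> blk12 Y + dB \<bullet> blk21 Y + dA \<bullet> blk22 Y"
  proof -
    have "(transpose ?M0 ** P ** ?dM) \<bullet> S = ((transpose ?M0 ** P ** Bbar B) ** Kmat dA dB dC ** Cbar C) \<bullet> S"
      unfolding dMf_def by (simp add: matrix_mul_assoc)
    also have "\<dots> = ((transpose ?M0 ** P ** Bbar B) ** Kmat dA dB dC) \<bullet> (S ** transpose (Cbar C))"
      by (rule inner_move_right)
    also have "\<dots> = Kmat dA dB dC \<bullet> (transpose (transpose ?M0 ** P ** Bbar B) ** (S ** transpose (Cbar C)))"
      by (rule inner_move_left)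
    also have "\<dots> = Kmat dA dB dC \<bullet> Y"
      unfolding Y_def by (simp add: matrix_transpose_mul P matrix_mul_assoc)
    also have "\<dots> = Kmat dA dB dC \<bullet> blk (blk11 Y) (blk12 Y) (blk21 Y) (blk22 Y)"
      using blk_eta[of Y] by simp
    also have "\<dots> = dC \<bullet> blk12 Y + dB \<bullet> blk21 Y + dA \<bullet> blk22 Y"
      by (simp add: Kmat_def blk_inner)
    finally show ?thesis .
  qed
  have T2: "(transpose ?dM ** P ** ?M0) \<bullet> S = (transpose ?M0 ** P ** ?dM) \<bullet> S"
  proof -
    have "transpose ?dM ** P ** ?M0 = transpose (transpose ?M0 ** P ** ?dM)"
      by (simp add: matrix_transpose_mul matrix_mul_assoc P)
    then show ?thesis using inner_transpose_sym[OF S] by simp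
  qed
  have L: "E1f A B C R AK BK CK P dA dB dC \<bullet> S
      = 2 * (dC \<bullet> (R ** CK ** blk22 S)) + 2 * (dC \<bullet> blk12 Y + dB \<bullet> blk21 Y + dA \<bullet> blk22 Y)"
    unfolding E1f_def inner_add_left T1 T2 T3 by simp
  have GC: "2 *\<^sub>R (transpose B ** (blk11 P ** A + blk12 P ** BK ** C) ** blk12 S)
                + 2 *\<^sub>R (((R + transpose B ** blk11 P ** B) ** CK + transpose B ** blk12 P ** AK) ** blk22 S)
      = 2 *\<^sub>R (blk12 Y + R ** CK ** blk22 S)"
    unfolding Yb by (simp add: mdist matrix_mul_assoc add_ac scaleR_add_right[symmetric])
  have GB: "2 *\<^sub>R ((transpose (blk12 P) ** A + blk22 P ** BK ** C) ** blk11 S ** transpose C)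
                + 2 *\<^sub>R ((transpose (blk12 P) ** B ** CK + blk22 P ** AK) ** transpose (blk12 S) ** transpose C)
      = 2 *\<^sub>R blk21 Y"
    unfolding Yb by (simp add: scaleR_add_right[symmetric])
  have GA: "2 *\<^sub>R ((transpose (blk12 P) ** B ** CK + blk22 P ** AK) ** blk22 S)
                + 2 *\<^sub>R ((transpose (blk12 P) ** A + blk22 P ** BK ** C) ** blk12 S)
      = 2 *\<^sub>R blk22 Y"
    unfolding Yb by (simp add: scaleR_add_right[symmetric])
  show ?thesis unfolding GA GB GC L
    by (simp add: inner_add_left inner_add_right inner_commute algebra_simps)
qed




lemma inner_mn: "\<bar>X \<bullet> Y\<bar> \<le> mn X * mn (Y::real^'a::finite^'b::finite)"
proof -
  have "\<bar>X \<bullet> Y\<bar> \<le> norm X * norm Y" by (rule Cauchy_Schwarz_ineq2)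
  also have "\<dots> \<le> mn X * mn Y" by (intro mult_mono norm_le_mn) (auto intro: mn_nonneg)
  finally show ?thesis .
qed

lemma deriv_from_quad:
  fixes F :: "'a::real_normed_vector \<Rightarrow> real"
  assumes G: "bounded_linear G" and d: "0 < \<delta>" and C: "0 \<le> C"
    and bnd: "\<And>h. norm h < \<delta> \<Longrightarrow> \<bar>F (x + h) - F x - G h\<bar> \<le> C * (norm h)^2"
  shows "(F has_derivative G) (at x)"
  unfolding has_derivative_at_alt
proof (intro conjI G allI impI)
  fix e :: real assume e: "0 < e"
  define d' where "d' = min \<delta> (e / (C + 1))"
  have d': "0 < d'" using d e C unfolding d'_def by auto
  show "\<exists>d>0. \<forall>y. norm (y - x) < d \<longrightarrow> norm (F y - F x - G (y - x)) \<le> e * norm (y - x)"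
  proof (intro exI[of _ d'] conjI allI impI d')
    fix y assume y: "norm (y - x) < d'"
    define h where "h = y - x"
    have hy: "y = x + h" unfolding h_def by simp
    have h1: "norm h < \<delta>" and h2: "norm h < e / (C + 1)" using y unfolding d'_def h_def by auto
    have "norm (F y - F x - G (y - x)) = \<bar>F (x + h) - F x - G h\<bar>" by (simp add: hy)
    also have "\<dots> \<le> C * (norm h)^2" by (rule bnd[OF h1])
    also have "\<dots> = (C * norm h) * norm h" by (simp add: power2_eq_square)
    also have "\<dots> \<le> e * norm h"
    proof (rule mult_right_mono)
      have "C * norm h \<le> (C + 1) * norm h" by (simp add: algebra_simps)
      also have "\<dots> \<le> (C + 1) * (e / (C + 1))" using h2 C by (intro mult_left_mono) auto
      also have "\<dots> = e" using C by simp
      finally show "C * norm h \<le> e" .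
    qed simp
    finally show "norm (F y - F x - G (y - x)) \<le> e * norm (y - x)" by (simp add: h_def)
  qed
qed

lemma Acl_shift: "Acl A B C (AK + dA) (BK + dB) (CK + dC) = Acl A B C AK BK CK + dMf B C dA dB dC"
  unfolding Acl_def dMf_def by (simp add: Kmat_add mdist)

lemma Wm_shift: "Wm Q R (CK + dC) = Wm Q R CK
    + transpose Fsel ** (transpose dC ** R ** CK + transpose CK ** R ** dC) ** Fsel
    + transpose Fsel ** transpose dC ** R ** dC ** Fsel"
  unfolding Wm_def by (simp add: transpose_add mdist matrix_mul_assoc algebra_simps)

lemma E_split:
  fixes P M0 dM W0 T1 T2 :: "real^'k::finite^'k"
  assumes "P = W0 + transpose M0 ** P ** M0"
  shows "(W0 + T1 + T2) + transpose (M0 + dM) ** P ** (M0 + dM) - P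
       = (T1 + transpose dM ** P ** M0 + transpose M0 ** P ** dM) + (T2 + transpose dM ** P ** dM)"
proof -
  have "(W0 + T1 + T2) + transpose (M0 + dM) ** P ** (M0 + dM) - P
     = (W0 + T1 + T2) + transpose (M0 + dM) ** P ** (M0 + dM) - (W0 + transpose M0 ** P ** M0)"
    using assms by simp
  also have "\<dots> = (T1 + transpose dM ** P ** M0 + transpose M0 ** P ** dM) + (T2 + transpose dM ** P ** dM)"
    by (simp add: transpose_add mdist algebra_simps)
  finally show ?thesis .
qed

lemma dMf_add: "dMf B C (a + a') (b + b') (c + c') = dMf B C a b c + dMf B C a' b' c'"
  unfolding dMf_def by (simp add: Kmat_add mdist)

lemma dMf_scale: "dMf B C (k *\<^sub>R a) (k *\<^sub>R b) (k *\<^sub>R c) = k *\<^sub>R dMf B C a b c"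
  unfolding dMf_def by (simp add: Kmat_scale matrix_scalar_ac scalar_matrix_assoc)

lemma lin_dMf: "linear (\<lambda>x. dMf B C (fst x) (fst (snd x)) (snd (snd x)))"
  by (intro linearI) (simp_all add: dMf_add dMf_scale)

lemma E1f_add: "E1f A B C R AK BK CK P (a + a') (b + b') (c + c')
    = E1f A B C R AK BK CK P a b c + E1f A B C R AK BK CK P a' b' c'"
  unfolding E1f_def by (simp add: dMf_add transpose_add mdist algebra_simps)

lemma E1f_scale: "E1f A B C R AK BK CK P (k *\<^sub>R a) (k *\<^sub>R b) (k *\<^sub>R c)
    = k *\<^sub>R E1f A B C R AK BK CK P a b c"
proof -
  have i: "transpose (k *\<^sub>R c) ** R ** CK + transpose CK ** R ** (k *\<^sub>R c)
      = k *\<^sub>R (transpose c ** R ** CK + transpose CK ** R ** c)"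
    by (simp add: transpose_scalar matrix_scalar_ac scalar_matrix_assoc scaleR_add_right)
  have t1: "transpose Fsel ** (k *\<^sub>R (transpose c ** R ** CK + transpose CK ** R ** c)) ** Fsel
     = k *\<^sub>R (transpose Fsel ** (transpose c ** R ** CK + transpose CK ** R ** c) ** Fsel)"
    by (simp only: matrix_scalar_ac scalar_matrix_assoc)
  show ?thesis unfolding E1f_def i t1
    by (simp add: dMf_scale transpose_scalar matrix_scalar_ac scalar_matrix_assoc scaleR_add_right)
qed

lemma lin_E1f: "linear (\<lambda>x. E1f A B C R AK BK CK P (fst x) (fst (snd x)) (snd (snd x)))"
  by (intro linearI) (simp_all add: E1f_add E1f_scale)




lemma mn_zero: "mn (0::real^'a::finite^'b::finite) = 0"
  unfolding mn_def by simp

lemma mn_prod5: "mn (a ** b ** c ** d ** e) \<le> mn a * mn b * mn c * mn d * mn e"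
proof -
  have "mn (a ** b ** c ** d ** e) \<le> mn (a ** b ** c ** d) * mn e" by (rule mn_mult)
  also have "\<dots> \<le> (mn a * mn b * mn c * mn d) * mn e"
    by (intro mult_right_mono mn_nonneg order_trans[OF mn_mult] mult_right_mono
        order_trans[OF mn_prod3]) (auto intro: mn_nonneg)
  finally show ?thesis by simp
qed

lemma mono5: 
  fixes a b b' c d d' e :: real
  assumes "0 \<le> a" "0 \<le> b" "b \<le> b'" "0 \<le> c" "0 \<le> d" "d \<le> d'" "0 \<le> e"
  shows "a * b * c * d * e \<le> a * b' * c * d' * e"
proof -
  have "a * b * c * d \<le> a * b' * c * d'"
    using assms by (intro mult_mono mult_right_mono mult_left_mono) (auto intro: mult_nonneg_nonneg order_trans)
  then show ?thesis using assms by (intro mult_right_mono) auto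
qed

lemma deriv_main:
  fixes A :: "real^'n::finite^'n" and B :: "real^'m::finite^'n" and C :: "real^'n^'d::finite"
    and Q :: "real^'n^'n" and R :: "real^'m^'m" and D :: "(real^('n + 'n)) measure"
    and AK :: "real^'n^'n" and BK :: "real^'d^'n" and CK :: "real^'n^'m"
  assumes sets: "sets D = sets borel" and int: "integrable D (\<lambda>z. norm z ^ 2)"
    and g: "geo (Acl A B C AK BK CK) c s" and c: "0 < c"
  shows "(Jcost D A B C Q R has_derivative
     (\<lambda>x. E1f A B C R AK BK CK (SerP (Acl A B C AK BK CK) (Wm Q R CK)) (fst x) (fst (snd x)) (snd (snd x))
          \<bullet> SerP (transpose (Acl A B C AK BK CK)) (Xmom D))) (at (AK, BK, CK))"
proof -
  define M0 where "M0 = Acl A B C AK BK CK"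
  define W0 where "W0 = Wm Q R CK"
  define P where "P = SerP M0 W0"
  define X where "X = Xmom D"
  define S0 where "S0 = SerP (transpose M0) X"
  define dM where "dM = (\<lambda>x::(real^'n^'n) \<times> (real^'d^'n) \<times> (real^'n^'m). dMf B C (fst x) (fst (snd x)) (snd (snd x)))"
  define E1 where "E1 = (\<lambda>x::(real^'n^'n) \<times> (real^'d^'n) \<times> (real^'n^'m). E1f A B C R AK BK CK P (fst x) (fst (snd x)) (snd (snd x)))"
  define G where "G = (\<lambda>x. E1 x \<bullet> S0)"
  have g0: "geo M0 c s" using g unfolding M0_def .
  have s: "0 \<le> s" "s < 1" using g0 unfolding geo_def by auto
  obtain K1 K2 where KK: "\<And>M. mn (M - M0) \<le> (1 - s) / (2 * c) \<Longrightarrow> geo M c ((1 + s) / 2) \<and>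
       mn (SerP (transpose M) X - S0) \<le> K1 * mn (M - M0) \<and> mn (SerP (transpose M) X) \<le> K2"
    using perturb_all[OF g0 c, of X] unfolding S0_def by blast
  have K2: "0 \<le> K2"
  proof -
    have "mn (M0 - M0) \<le> (1 - s) / (2 * c)" using s c by (simp add: mn_zero)
    then have "mn (SerP (transpose M0) X) \<le> K2" using KK by blast
    then show ?thesis using mn_nonneg order_trans by blast
  qed
  have linE1: "linear E1" unfolding E1_def by (rule lin_E1f)
  have lindM: "linear dM" unfolding dM_def by (rule lin_dMf)
  obtain Bd where Bd: "Bd > 0" "\<And>x. norm (dM x) \<le> Bd * norm x"
    using linear_bounded_pos[OF lindM] by blast
  obtain Be where Be: "Be > 0" "\<And>x. norm (E1 x) \<le> Be * norm x"
    using linear_bounded_pos[OF linE1] by blast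
  define N2 where "N2 = real CARD('n+'n) * real CARD('n+'n)"
  define Nc where "Nc = real CARD('m) * real CARD('n)"
  have N2: "0 \<le> N2" and Nc: "0 \<le> Nc" unfolding N2_def Nc_def by auto
  have mndM: "mn (dM x) \<le> (N2 * Bd) * norm x" for x
  proof -
    have "mn (dM x) \<le> N2 * norm (dM x)" unfolding N2_def by (rule mn_le_norm)
    also have "\<dots> \<le> N2 * (Bd * norm x)" by (intro mult_left_mono Bd N2)
    finally show ?thesis by simp
  qed
  have mnE1: "mn (E1 x) \<le> (N2 * Be) * norm x" for x
  proof -
    have "mn (E1 x) \<le> N2 * norm (E1 x)" unfolding N2_def by (rule mn_le_norm)
    also have "\<dots> \<le> N2 * (Be * norm x)" by (intro mult_left_mono Be N2)
    finally show ?thesis by simp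
  qed
  have mndC: "mn (snd (snd x)) \<le> Nc * norm x" for x :: "(real^'n^'n) \<times> (real^'d^'n) \<times> (real^'n^'m)"
  proof -
    have "mn (snd (snd x)) \<le> Nc * norm (snd (snd x))" unfolding Nc_def by (rule mn_le_norm)
    also have "norm (snd (snd x)) \<le> norm x"
    proof -
      obtain a b c where "x = (a, b, c)" by (cases x) auto
      then show ?thesis using norm_snd_le[of c b] norm_snd_le[of "(b, c)" a] by simp
    qed
    finally show ?thesis using Nc by (simp add: mult_left_mono)
  qed
  define mF where "mF = mn (Fsel :: real^('n+'n)^'n)"
  have mF: "0 \<le> mF" unfolding mF_def by (rule mn_nonneg)
  define Lc where "Lc = N2 * Bd"
  have Lc: "0 \<le> Lc" unfolding Lc_def using N2 Bd by simp
  define \<delta> where "\<delta> = (1 - s) / (2 * c) / (Lc + 1)"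
  have \<delta>: "0 < \<delta>" unfolding \<delta>_def using s c Lc by simp
  define Cst where "Cst = (N2 * Be) * (\<bar>K1\<bar> * Lc) + (mF * Nc * mn R * Nc * mF + Lc * mn P * Lc) * K2"
  have Cst: "0 \<le> Cst" unfolding Cst_def using N2 Be Lc Nc K2 mF
    by (intro add_nonneg_nonneg mult_nonneg_nonneg) (auto intro: mn_nonneg)
  have bl: "bounded_linear G"
  proof -
    have "linear G" unfolding G_def
      using linear_compose[OF linE1 bounded_linear.linear[OF bounded_linear_inner_left[of S0]]]
      by (simp add: o_def)
    then show ?thesis by (rule linear_conv_bounded_linear[THEN iffD1])
  qed
  have bnd: "\<bar>Jcost D A B C Q R ((AK, BK, CK) + x) - Jcost D A B C Q R (AK, BK, CK) - G x\<bar> \<le> Cst * (norm x)^2"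
    if x: "norm x < \<delta>" for x
  proof -
    obtain dA dB dC where xe: "x = (dA, dB, dC)" by (cases x) auto
    define M where "M = M0 + dM x"
    define W where "W = Wm Q R (CK + dC)"
    define T1 where "T1 = transpose Fsel ** (transpose dC ** R ** CK + transpose CK ** R ** dC) ** Fsel"
    define T2 where "T2 = transpose (Fsel :: real^('n+'n)^'n) ** transpose dC ** R ** dC ** Fsel"
    define E2 where "E2 = T2 + transpose (dM x) ** P ** dM x"
    have dMx: "M - M0 = dM x" unfolding M_def by simp
    have d1: "mn (M - M0) \<le> Lc * norm x" unfolding dMx Lc_def by (rule mndM)
    have "Lc * norm x \<le> Lc * \<delta>" using x Lc by (intro mult_left_mono) auto
    also have "\<dots> \<le> (1 - s) / (2 * c)"
    proof -
      have "Lc * \<delta> = (Lc / (Lc + 1)) * ((1 - s) / (2 * c))" unfolding \<delta>_def by simp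
      also have "\<dots> \<le> 1 * ((1 - s) / (2 * c))" using Lc s c by (intro mult_right_mono) auto
      finally show ?thesis by simp
    qed
    finally have d2: "mn (M - M0) \<le> (1 - s) / (2 * c)" using d1 by linarith
    from KK[OF d2] have gM: "geo M c ((1 + s) / 2)"
      and D1: "mn (SerP (transpose M) X - S0) \<le> K1 * mn (M - M0)"
      and D2: "mn (SerP (transpose M) X) \<le> K2" by auto
    have Kx: "(AK, BK, CK) + x = (AK + dA, BK + dB, CK + dC)" by (simp add: xe)
    have MA: "Acl A B C (AK + dA) (BK + dB) (CK + dC) = M"
      unfolding M_def M0_def dM_def xe by (simp add: Acl_shift)
    have J1: "Jcost D A B C Q R ((AK, BK, CK) + x) = SerP M W \<bullet> X"
      unfolding Kx W_def X_def using J_formula[OF sets int, of A B C "AK + dA" "BK + dB" "CK + dC" c "(1 + s) / 2" Q R] gM MA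
      by simp
    have J0: "Jcost D A B C Q R (AK, BK, CK) = P \<bullet> X"
      unfolding P_def X_def W0_def using J_formula[OF sets int g] by (simp add: M0_def)
    have Peq: "P = W0 + transpose M0 ** P ** M0" unfolding P_def by (rule SerP_eq[OF g0])
    have Wsplit: "W = W0 + T1 + T2" unfolding W_def W0_def T1_def T2_def by (rule Wm_shift)
    have E1x: "E1 x = T1 + transpose (dM x) ** P ** M0 + transpose M0 ** P ** dM x"
      unfolding E1_def E1f_def T1_def dM_def M0_def xe by simp
    have Esplit: "W + transpose M ** P ** M - P = E1 x + E2"
      unfolding Wsplit M_def E1x E2_def by (rule E_split[OF Peq])
    have "Jcost D A B C Q R ((AK, BK, CK) + x) - Jcost D A B C Q R (AK, BK, CK) = (SerP M W - P) \<bullet> X"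
      unfolding J1 J0 by (simp add: inner_diff_left)
    also have "\<dots> = SerP M (E1 x + E2) \<bullet> X"
      using SerP_telescope[OF gM, of W P] Esplit by simp
    also have "\<dots> = (E1 x + E2) \<bullet> SerP (transpose M) X" by (rule SerP_inner[OF gM])
    finally have JD: "Jcost D A B C Q R ((AK, BK, CK) + x) - Jcost D A B C Q R (AK, BK, CK) - G x
        = E1 x \<bullet> (SerP (transpose M) X - S0) + E2 \<bullet> SerP (transpose M) X"
      unfolding G_def by (simp add: inner_add_left inner_diff_right)
    have mnE2: "mn E2 \<le> (mF * Nc * mn R * Nc * mF + Lc * mn P * Lc) * (norm x)^2"
    proof -
      have a: "mn T2 \<le> (mF * Nc * mn R * Nc * mF) * (norm x)^2"
      proof -
        have "mn T2 \<le> mn (transpose (Fsel :: real^('n+'n)^'n)) * mn (transpose dC) * mn R * mn dC * mn (Fsel :: real^('n+'n)^'n)"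
          unfolding T2_def by (rule mn_prod5)
        also have "\<dots> = mF * mn dC * mn R * mn dC * mF" by (simp add: mn_transpose mF_def)
        also have "\<dots> \<le> mF * (Nc * norm x) * mn R * (Nc * norm x) * mF"
          using mndC[of x] mF by (intro mono5) (auto simp: xe intro: mn_nonneg)
        also have "\<dots> = (mF * Nc * mn R * Nc * mF) * (norm x)^2"
          by (simp add: power2_eq_square algebra_simps)
        finally show ?thesis .
      qed
      have b: "mn (transpose (dM x) ** P ** dM x) \<le> (Lc * mn P * Lc) * (norm x)^2"
      proof -
        have "mn (transpose (dM x) ** P ** dM x) \<le> mn (dM x) * mn P * mn (dM x)"
          using mn_prod3[of "transpose (dM x)" P "dM x"] by (simp add: mn_transpose)
        also have "\<dots> \<le> (Lc * norm x) * mn P * (Lc * norm x)"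
          using mndM[of x] N2 Bd(1) unfolding Lc_def
          by (intro mult_mono mult_right_mono) (auto intro: mn_nonneg mult_nonneg_nonneg)
        also have "\<dots> = (Lc * mn P * Lc) * (norm x)^2" by (simp add: power2_eq_square algebra_simps)
        finally show ?thesis .
      qed
      have "mn E2 \<le> mn T2 + mn (transpose (dM x) ** P ** dM x)" unfolding E2_def by (rule mn_add)
      also have "\<dots> \<le> (mF * Nc * mn R * Nc * mF) * (norm x)^2 + (Lc * mn P * Lc) * (norm x)^2"
        using a b by simp
      finally show ?thesis by (simp add: algebra_simps)
    qed
    have "\<bar>E1 x \<bullet> (SerP (transpose M) X - S0) + E2 \<bullet> SerP (transpose M) X\<bar>
        \<le> mn (E1 x) * mn (SerP (transpose M) X - S0) + mn E2 * mn (SerP (transpose M) X)"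
      by (rule order_trans[OF abs_triangle_ineq add_mono[OF inner_mn inner_mn]])
    also have "\<dots> \<le> ((N2 * Be) * norm x) * (\<bar>K1\<bar> * Lc * norm x)
        + ((mF * Nc * mn R * Nc * mF + Lc * mn P * Lc) * (norm x)^2) * K2"
    proof (rule add_mono)
      have "mn (SerP (transpose M) X - S0) \<le> \<bar>K1\<bar> * (Lc * norm x)"
      proof -
        have "mn (SerP (transpose M) X - S0) \<le> K1 * mn (M - M0)" by (rule D1)
        also have "\<dots> \<le> \<bar>K1\<bar> * mn (M - M0)" by (intro mult_right_mono) (auto intro: mn_nonneg)
        also have "\<dots> \<le> \<bar>K1\<bar> * (Lc * norm x)" by (intro mult_left_mono d1) auto
        finally show ?thesis .
      qed
      then show "mn (E1 x) * mn (SerP (transpose M) X - S0) \<le> ((N2 * Be) * norm x) * (\<bar>K1\<bar> * Lc * norm x)"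
        using mnE1[of x] N2 Be(1) by (intro mult_mono) (auto intro: mn_nonneg mult_nonneg_nonneg simp: mult.assoc)
      show "mn E2 * mn (SerP (transpose M) X) \<le> ((mF * Nc * mn R * Nc * mF + Lc * mn P * Lc) * (norm x)^2) * K2"
        using mnE2 D2 K2 order_trans[OF mn_nonneg mnE2] by (intro mult_mono) (auto intro: mn_nonneg)
    qed
    also have "\<dots> = Cst * (norm x)^2" unfolding Cst_def by (simp add: power2_eq_square algebra_simps)
    finally show ?thesis unfolding JD .
  qed
  have "(Jcost D A B C Q R has_derivative G) (at (AK, BK, CK))"
    by (rule deriv_from_quad[OF bl \<delta> Cst bnd])
  then show ?thesis unfolding G_def E1_def S0_def P_def W0_def M0_def X_def .
qed




theorem lemma4:
  fixes A :: "real^'n^'n" and B :: "real^'m^'n" and C :: "real^'n^'d"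
    and Q :: "real^'n^'n" and R :: "real^'m^'m"
    and D :: "(real^('n + 'n)) measure"
    and AK :: "real^'n^'n" and BK :: "real^'d^'n" and CK :: "real^'n^'m"
  assumes "psd_mat Q" and "pd_mat R"
    and "prob_space D" and "sets D = sets borel"
    and "integrable D (\<lambda>z. norm z ^ 2)"
    and "(AK, BK, CK) \<in> stab_set A B C"
  shows "let P = PK A B C Q R AK BK CK; S = SigmaK (Xmom D) A B C AK BK CK;
             P11 = blk11 P; P12 = blk12 P; P22 = blk22 P;
             S11 = blk11 S; S12 = blk12 S; S22 = blk22 S;
             GC = 2 *\<^sub>R (transpose B ** (P11 ** A + P12 ** BK ** C) ** S12)
                + 2 *\<^sub>R (((R + transpose B ** P11 ** B) ** CK + transpose B ** P12 ** AK) ** S22);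
             GB = 2 *\<^sub>R ((transpose P12 ** A + P22 ** BK ** C) ** S11 ** transpose C)
                + 2 *\<^sub>R ((transpose P12 ** B ** CK + P22 ** AK) ** transpose S12 ** transpose C);
             GA = 2 *\<^sub>R ((transpose P12 ** B ** CK + P22 ** AK) ** S22)
                + 2 *\<^sub>R ((transpose P12 ** A + P22 ** BK ** C) ** S12)
         in (Jcost D A B C Q R has_derivative
               (\<lambda>(dA, dB, dC). GA \<bullet> dA + GB \<bullet> dB + GC \<bullet> dC)) (at (AK, BK, CK))"
proof -
  define M0 where "M0 = Acl A B C AK BK CK"
  have sr: "Defs.spectral_radius M0 < 1" using assms(6) unfolding stab_set_def M0_def by simp
  obtain c0 s where cs: "0 \<le> c0" "0 \<le> s" "s < 1" and ent: "\<And>t i j. \<bar>mpow M0 t $ i $ j\<bar> \<le> c0 * s^t"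
    using rho_bound[OF sr] by blast
  define N2 where "N2 = real CARD('n+'n) * real CARD('n+'n)"
  define c where "c = N2 * c0 + 1"
  have c: "0 < c" unfolding c_def N2_def using cs by (simp add: add_nonneg_pos)
  have g: "geo M0 c s" unfolding geo_def
  proof (intro conjI allI)
    fix t
    have "mn (mpow M0 t) \<le> (\<Sum>i\<in>(UNIV::('n+'n) set). \<Sum>j\<in>(UNIV::('n+'n) set). c0 * s^t)"
      unfolding mn_def by (intro sum_mono ent)
    also have "\<dots> = (N2 * c0) * s^t" unfolding N2_def by simp
    also have "\<dots> \<le> c * s^t" unfolding c_def using cs by (intro mult_right_mono) auto
    finally show "mn (mpow M0 t) \<le> c * s^t" .
  qed (use c cs in auto)
  have Rsym: "transpose R = R" using assms(2) unfolding pd_mat_def by simp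
  have Rpsd: "0 \<le> x \<bullet> (R *v x)" for x
    using assms(2) unfolding pd_mat_def by (cases "x = 0") (auto intro: less_imp_le)
  have Qsym: "transpose Q = Q" and Qpsd: "\<And>x. 0 \<le> x \<bullet> (Q *v x)" using assms(1) unfolding psd_mat_def by auto
  have W0psd: "psd_mat (Wm Q R CK)" unfolding psd_mat_def
  proof (intro conjI allI)
    show "transpose (Wm Q R CK) = Wm Q R CK"
      unfolding Wm_def Qbar_def
      by (simp add: transpose_add blk_transpose transpose_zero Qsym matrix_transpose_mul Rsym matrix_mul_assoc)
    fix x :: "real^('n+'n)"
    show "0 \<le> x \<bullet> (Wm Q R CK *v x)" unfolding Wm_quad using Qpsd Rpsd by (simp add: add_nonneg_nonneg)
  qed
  have PKe: "PK A B C Q R AK BK CK = SerP M0 (Wm Q R CK)"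
    unfolding PK_def
  proof (rule the_equality)
    show "psd_mat (SerP M0 (Wm Q R CK)) \<and>
      SerP M0 (Wm Q R CK) = Qbar Q + transpose Fsel ** transpose CK ** R ** CK ** Fsel +
        transpose (Acl A B C AK BK CK) ** SerP M0 (Wm Q R CK) ** Acl A B C AK BK CK"
      using SerP_psd[OF g W0psd] SerP_eq[OF g, of "Wm Q R CK"] unfolding M0_def Wm_def by simp
    fix P
    assume "psd_mat P \<and> P = Qbar Q + transpose Fsel ** transpose CK ** R ** CK ** Fsel +
        transpose (Acl A B C AK BK CK) ** P ** Acl A B C AK BK CK"
    then have "P = Wm Q R CK + transpose M0 ** P ** M0" unfolding Wm_def M0_def by simp
    then show "P = SerP M0 (Wm Q R CK)" by (rule SerP_unique[OF g])
  qed
  have gT: "geo (transpose M0) c s" by (rule geo_transpose[OF g])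
  have Xpsd: "psd_mat (Xmom D)" by (rule Xmom_psd[OF assms(4,5)])
  have SKe: "SigmaK (Xmom D) A B C AK BK CK = SerP (transpose M0) (Xmom D)"
    unfolding SigmaK_def
  proof (rule the_equality)
    show "psd_mat (SerP (transpose M0) (Xmom D)) \<and>
      SerP (transpose M0) (Xmom D) = Xmom D + Acl A B C AK BK CK ** SerP (transpose M0) (Xmom D) ** transpose (Acl A B C AK BK CK)"
      using SerP_psd[OF gT Xpsd] SerP_eq[OF gT, of "Xmom D"] unfolding M0_def by simp
    fix S
    assume "psd_mat S \<and> S = Xmom D + Acl A B C AK BK CK ** S ** transpose (Acl A B C AK BK CK)"
    then have "S = Xmom D + transpose (transpose M0) ** S ** transpose M0" unfolding M0_def by simp
    then show "S = SerP (transpose M0) (Xmom D)" by (rule SerP_unique[OF gT])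
  qed
  have Psym: "transpose (SerP M0 (Wm Q R CK)) = SerP M0 (Wm Q R CK)"
    using SerP_psd[OF g W0psd] unfolding psd_mat_def by simp
  have Ssym: "transpose (SerP (transpose M0) (Xmom D)) = SerP (transpose M0) (Xmom D)"
    using SerP_psd[OF gT Xpsd] unfolding psd_mat_def by simp
  have der: "(Jcost D A B C Q R has_derivative
     (\<lambda>x. E1f A B C R AK BK CK (SerP M0 (Wm Q R CK)) (fst x) (fst (snd x)) (snd (snd x))
          \<bullet> SerP (transpose M0) (Xmom D))) (at (AK, BK, CK))"
    using deriv_main[OF assms(4,5) g[unfolded M0_def] c] unfolding M0_def .
  show ?thesis
    unfolding Let_def PKe SKe
    using der by (simp add: grad_identity[OF Psym Ssym Rsym] case_prod_beta')
qed


end
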